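(* Suppose that $2$ is invertible in $T$. Then for every sequence ${\mathbf s}$ in $\widehat{\mathcal S}$, $${\mathcal Y}_T({\mathbf s})=\Big\{(z_\sigma)\in\bigoplus_{\sigma\in I({\mathbf s})}Q_T\ \Big|\ \textstyle\sum_\sigma z_\sigma m_\sigma\in S_T\text{ for all }(m_\sigma)\in{\mathcal X}_T({\mathbf s})\Big\}.$$ Consequently ${\mathcal Y}_T({\mathbf s})$ is identified with the graded dual $\bigoplus_n\operatorname{Hom}_{S_T}({\mathcal X}_T({\mathbf s}),S_T\{n\})$ via the pairing $((x_\sigma),(y_\sigma))\mapsto\sum_\sigma x_\sigma y_\sigma$.
   Context: $R$ irreducible reduced finite root system (positive roots $R^+$, simple roots $\Pi$, highest root $\gamma$); $\widehat X=X\oplus\mathbb Z$, $\delta=(0,-1)$, affine roots $\widehat R=\{\alpha+n\delta\}$. $\widehat{\mathcal W}$ generated by $s_{\alpha,n}(v,m)=(v-(\langle\alpha,v\rangle-mn)\alpha^\vee,m)$, acting contragrediently on $\widehat X$; $\widehat{\mathcal S}=\{s_{\alpha,0}:\alpha\in\Pi\}\cup\{s_{\gamma,1}\}$ with simple affine roots $\alpha$ resp. $-\gamma+\delta$. $T$: commutative unital domain, affine roots nonzero in $\widehat X\otimes T$; $S_T$ symmetric algebra of $\widehat X\otimes T$ graded in even degrees, $M\{n\}_k=M_{n+k}$; $Q_T=S_T[2^{-1}][\alpha^{-1}:\alpha\in\widehat R]$. For ${\mathbf s}=(s_1,\dots,s_l)$: $I({\mathbf s})$ = strictly increasing tuples in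 $\{1,\dots,l\}$, $\operatorname{ev}(i_1,\dots,i_n)=s_{i_1}\cdots s_{i_n}$; ${\mathbf s}'=(s_1,\dots,s_{l-1})$, $I({\mathbf s})=I({\mathbf s}')\sqcup I({\mathbf s}')s_l$; $\Delta(z)_\gamma=\Delta(z)_{\gamma s_l}=z_\gamma$; $c^\lambda$ multiplies the $\sigma$-component by $\operatorname{ev}(\sigma)(\lambda)\otimes1$; $\alpha_l$ the simple affine root of $s_l$. ${\mathcal X}_T(\emptyset)=S_T$, ${\mathcal X}_T({\mathbf s})=\Delta({\mathcal X}_T({\mathbf s}'))+c^{\alpha_l}\Delta({\mathcal X}_T({\mathbf s}'))\subset\bigoplus_{I({\mathbf s})}S_T$; ${\mathcal Y}_T(\emptyset)=S_T\subset Q_T$, ${\mathcal Y}_T({\mathbf s})=\Delta({\mathcal Y}_T({\mathbf s}'))+(c^{\alpha_l})^{-1}\Delta({\mathcal Y}_T({\mathbf s}'))\subset\bigoplus_{I({\mathbf s})}Q_T$. *)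

theory Defs
  imports "HOL-Analysis.Finite_Cartesian_Product" "HOL-Library.Poly_Mapping"
    "HOL-Library.Option_ord" "HOL-Computational_Algebra.Fraction_Field"
begin

text \<open>The lattice X is Z^n, realised as int^'n; its dual lattice is identified with int^'n
  via the standard pairing.  Coroots are given by a map cor.\<close>

definition pair :: "(int, 'n::finite) vec \<Rightarrow> (int, 'n) vec \<Rightarrow> int" where
  "pair x v = (\<Sum>i\<in>UNIV. x $ i * v $ i)"

definition refl :: "((int, 'n::finite) vec \<Rightarrow> (int, 'n) vec) \<Rightarrow> (int, 'n) vec \<Rightarrow> (int, 'n) vec \<Rightarrow> (int, 'n) vec" where
  "refl cor a x = x - pair x (cor a) *s a"

definition corefl :: "((int, 'n::finite) vec \<Rightarrow> (int, 'n) vec) \<Rightarrow> (int, 'n) vec \<Rightarrow> (int, 'n) vec \<Rightarrow> (int, 'n) vec" where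
  "corefl cor a v = v - pair a v *s cor a"

definition root_system :: "((int, 'n::finite) vec) set \<Rightarrow> ((int, 'n) vec \<Rightarrow> (int, 'n) vec) \<Rightarrow> bool" where
  "root_system R cor \<longleftrightarrow> finite R \<and> R \<noteq> {} \<and> inj_on cor R \<and>
     (\<forall>a\<in>R. pair a (cor a) = 2) \<and>
     (\<forall>a\<in>R. \<forall>b\<in>R. refl cor a b \<in> R) \<and>
     (\<forall>a\<in>R. \<forall>b\<in>R. corefl cor a (cor b) \<in> cor ` R)"

definition reduced :: "((int, 'n::finite) vec) set \<Rightarrow> bool" where
  "reduced R \<longleftrightarrow> (\<forall>a\<in>R. 2 *s a \<notin> R)"

definition irreducible_rs :: "((int, 'n::finite) vec) set \<Rightarrow> ((int, 'n) vec \<Rightarrow> (int, 'n) vec) \<Rightarrow> bool" where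
  "irreducible_rs R cor \<longleftrightarrow> R \<noteq> {} \<and>
     \<not> (\<exists>R1 R2. R1 \<union> R2 = R \<and> R1 \<inter> R2 = {} \<and> R1 \<noteq> {} \<and> R2 \<noteq> {} \<and>
            (\<forall>a\<in>R1. \<forall>b\<in>R2. pair a (cor b) = 0))"

definition is_base :: "((int, 'n::finite) vec) set \<Rightarrow> ((int, 'n) vec) set \<Rightarrow> bool" where
  "is_base R P \<longleftrightarrow> P \<subseteq> R \<and>
     (\<forall>c :: (int, 'n) vec \<Rightarrow> int. (\<Sum>a\<in>P. c a *s a) = 0 \<longrightarrow> (\<forall>a\<in>P. c a = 0)) \<and>
     (\<forall>b\<in>R. \<exists>c :: (int, 'n) vec \<Rightarrow> int. b = (\<Sum>a\<in>P. c a *s a) \<and>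
              ((\<forall>a\<in>P. c a \<ge> 0) \<or> (\<forall>a\<in>P. c a \<le> 0)))"

definition positive_roots :: "((int, 'n::finite) vec) set \<Rightarrow> ((int, 'n) vec) set \<Rightarrow> ((int, 'n) vec) set" where
  "positive_roots R P = {b\<in>R. \<exists>c :: (int, 'n) vec \<Rightarrow> int. b = (\<Sum>a\<in>P. c a *s a) \<and> (\<forall>a\<in>P. c a \<ge> 0)}"

definition highest_root :: "((int, 'n::finite) vec) set \<Rightarrow> ((int, 'n) vec) set \<Rightarrow> (int, 'n) vec \<Rightarrow> bool" where
  "highest_root R P g \<longleftrightarrow> g \<in> R \<and>
     (\<forall>b\<in>R. \<exists>c :: (int, 'n) vec \<Rightarrow> int. g - b = (\<Sum>a\<in>P. c a *s a) \<and> (\<forall>a\<in>P. c a \<ge> 0))"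

text \<open>Elements of Xhat are pairs (lambda, k); delta = (0,-1), so alpha + m delta = (alpha, -m).\<close>

definition affine_roots :: "((int, 'n::finite) vec) set \<Rightarrow> (((int, 'n) vec) \<times> int) set" where
  "affine_roots R = {(a, k) | a k. a \<in> R}"

text \<open>The generator s_{alpha,m} is encoded by the pair (alpha, m).  Its (contragredient) action
  on Xhat: s_{alpha,m}(lambda,k) = (lambda - <lambda,alpha^vee> alpha, k - m <lambda,alpha^vee>),
  i.e. the reflection along the affine root alpha - m delta.\<close>
definition act :: "((int, 'n::finite) vec \<Rightarrow> (int, 'n) vec) \<Rightarrow> ((int, 'n) vec) \<times> int \<Rightarrow> ((int, 'n) vec) \<times> int \<Rightarrow> ((int, 'n) vec) \<times> int" where
  "act cor t x = (fst x - pair (fst x) (cor (fst t)) *s fst t,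
                  snd x - snd t * pair (fst x) (cor (fst t)))"

definition Shat :: "((int, 'n::finite) vec) set \<Rightarrow> (int, 'n) vec \<Rightarrow> (((int, 'n) vec) \<times> int) set" where
  "Shat P g = {(a, 0) | a. a \<in> P} \<union> {(g, 1)}"

text \<open>Simple affine root of a simple reflection: alpha for s_{alpha,0}, -gamma + delta for s_{gamma,1}.\<close>
definition sroot :: "((int, 'n::finite) vec) \<times> int \<Rightarrow> ((int, 'n) vec) \<times> int" where
  "sroot t = (if snd t = 0 then (fst t, 0) else (- fst t, -1))"

definition Iset :: "nat \<Rightarrow> nat list set" where
  "Iset l = {\<sigma>. sorted_wrt (<) \<sigma> \<and> set \<sigma> \<subseteq> {1..l}}"

definition ev :: "((int, 'n::finite) vec \<Rightarrow> (int, 'n) vec) \<Rightarrow> (((int, 'n) vec) \<times> int) list \<Rightarrow> nat list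
    \<Rightarrow> ((int, 'n) vec) \<times> int \<Rightarrow> ((int, 'n) vec) \<times> int" where
  "ev cor s \<sigma> x = foldr (\<lambda>i. act cor (s ! (i - 1))) \<sigma> x"

text \<open>S_T = Sym(Xhat \<otimes> T) is the polynomial ring over T in the standard basis of
  Xhat \<otimes> T = T^('n option) (None = the Z-summand); X\<otimes>T is placed in degree 2.\<close>
type_synonym ('n, 't) spoly = "('n option \<Rightarrow>\<^sub>0 nat) \<Rightarrow>\<^sub>0 't"

definition tensT :: "((int, 'n::finite) vec) \<times> int \<Rightarrow> 'n option \<Rightarrow> 't::comm_ring_1" where
  "tensT x = (\<lambda>j. case j of None \<Rightarrow> of_int (snd x) | Some i \<Rightarrow> of_int (fst x $ i))"

definition linS :: "('n::finite option \<Rightarrow> 't::comm_ring_1) \<Rightarrow> ('n, 't) spoly" where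
  "linS w = (\<Sum>i\<in>UNIV. Poly_Mapping.single (Poly_Mapping.single i 1) (w i))"

definition linX :: "((int, 'n::finite) vec) \<times> int \<Rightarrow> ('n, 't::comm_ring_1) spoly" where
  "linX x = linS (tensT x)"

definition emb :: "('n::{finite,linorder}, 't::idom) spoly \<Rightarrow> ('n, 't) spoly fract" where
  "emb f = Fract f 1"

definition Sset :: "('n::{finite,linorder}, 't::idom) spoly fract set" where
  "Sset = range emb"

text \<open>Q_T = S_T[2^{-1}][beta^{-1} : beta affine root], inside the fraction field of S_T.\<close>
definition Dens :: "((int, 'n::{finite,linorder}) vec) set \<Rightarrow> ('n, 't::idom) spoly set" where
  "Dens R = {2 ^ k * prod_list (map linX bs) | k bs. set bs \<subseteq> affine_roots R}"

definition Qset :: "((int, 'n::{finite,linorder}) vec) set \<Rightarrow> ('n, 't::idom) spoly fract set" where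
  "Qset R = {Fract f d | f d. d \<in> Dens R}"

definition Delta :: "nat \<Rightarrow> (nat list \<Rightarrow> 'a) \<Rightarrow> nat list \<Rightarrow> 'a" where
  "Delta l z \<sigma> = (if \<sigma> \<noteq> [] \<and> last \<sigma> = l then z (butlast \<sigma>) else z \<sigma>)"

text \<open>Recursion on the reversed sequence: XR (rev s) = X_T(s).\<close>
primrec XR :: "((int, 'n::{finite,linorder}) vec \<Rightarrow> (int, 'n) vec) \<Rightarrow> (((int, 'n) vec) \<times> int) list
    \<Rightarrow> (nat list \<Rightarrow> ('n, 't::idom) spoly) set" where
  "XR cor [] = {z. \<forall>\<sigma>. \<sigma> \<noteq> [] \<longrightarrow> z \<sigma> = 0}"
| "XR cor (t # rs) =
     {(\<lambda>\<sigma>. Delta (Suc (length rs)) a \<sigma>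
            + linX (ev cor (rev (t # rs)) \<sigma> (sroot t)) * Delta (Suc (length rs)) b \<sigma>)
      | a b. a \<in> XR cor rs \<and> b \<in> XR cor rs}"

primrec YR :: "((int, 'n::{finite,linorder}) vec \<Rightarrow> (int, 'n) vec) \<Rightarrow> (((int, 'n) vec) \<times> int) list
    \<Rightarrow> (nat list \<Rightarrow> ('n, 't::idom) spoly fract) set" where
  "YR cor [] = {z. z [] \<in> Sset \<and> (\<forall>\<sigma>. \<sigma> \<noteq> [] \<longrightarrow> z \<sigma> = 0)}"
| "YR cor (t # rs) =
     {(\<lambda>\<sigma>. Delta (Suc (length rs)) a \<sigma>
            + Delta (Suc (length rs)) b \<sigma> / emb (linX (ev cor (rev (t # rs)) \<sigma> (sroot t))))
      | a b. a \<in> YR cor rs \<and> b \<in> YR cor rs}"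

definition Xmod :: "((int, 'n::{finite,linorder}) vec \<Rightarrow> (int, 'n) vec) \<Rightarrow> (((int, 'n) vec) \<times> int) list
    \<Rightarrow> (nat list \<Rightarrow> ('n, 't::idom) spoly) set" where
  "Xmod cor s = XR cor (rev s)"

definition Ymod :: "((int, 'n::{finite,linorder}) vec \<Rightarrow> (int, 'n) vec) \<Rightarrow> (((int, 'n) vec) \<times> int) list
    \<Rightarrow> (nat list \<Rightarrow> ('n, 't::idom) spoly fract) set" where
  "Ymod cor s = YR cor (rev s)"

definition homog :: "int \<Rightarrow> ('n, 't::zero) spoly \<Rightarrow> bool" where
  "homog k f \<longleftrightarrow> (\<forall>m\<in>Poly_Mapping.keys f. 2 * int (\<Sum>v\<in>Poly_Mapping.keys m. Poly_Mapping.lookup m v) = k)"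

definition ghom :: "(nat list \<Rightarrow> ('n, 't::comm_ring_1) spoly) set \<Rightarrow> int
    \<Rightarrow> ((nat list \<Rightarrow> ('n, 't) spoly) \<Rightarrow> ('n, 't) spoly) \<Rightarrow> bool" where
  "ghom M n \<phi> \<longleftrightarrow>
     (\<forall>x\<in>M. \<forall>y\<in>M. \<phi> (\<lambda>\<sigma>. x \<sigma> + y \<sigma>) = \<phi> x + \<phi> y) \<and>
     (\<forall>a. \<forall>x\<in>M. \<phi> (\<lambda>\<sigma>. a * x \<sigma>) = a * \<phi> x) \<and>
     (\<forall>k. \<forall>x\<in>M. (\<forall>\<sigma>. homog k (x \<sigma>)) \<longrightarrow> homog (n + k) (\<phi> x)) \<and>
     (\<forall>x. x \<notin> M \<longrightarrow> \<phi> x = 0)"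

definition gdual :: "(nat list \<Rightarrow> ('n, 't::comm_ring_1) spoly) set
    \<Rightarrow> ((nat list \<Rightarrow> ('n, 't) spoly) \<Rightarrow> ('n, 't) spoly) set" where
  "gdual M = {\<phi>. \<exists>F :: int set. \<exists>\<psi>. finite F \<and> (\<forall>n\<in>F. ghom M n (\<psi> n)) \<and>
                   \<phi> = (\<lambda>x. \<Sum>n\<in>F. \<psi> n x)}"

end

theory Submission
  imports Defs
begin


lemma emb_add: "emb (f + g) = emb f + emb g" by (simp add: emb_def)
lemma emb_mult: "emb (f * g) = emb f * emb g" by (simp add: emb_def)
lemma emb_uminus: "emb (- f) = - emb f" by (simp add: emb_def)
lemma emb_diff: "emb (f - g) = emb f - emb g" by (simp add: emb_def)
lemma emb_0 [simp]: "emb 0 = 0" by (simp add: emb_def fract_collapse)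
lemma emb_1 [simp]: "emb 1 = 1" by (simp add: emb_def fract_collapse)
lemma emb_inj: "emb f = emb g \<longleftrightarrow> f = g" by (simp add: emb_def eq_fract)
lemma emb_eq_0: "emb f = 0 \<longleftrightarrow> f = 0" using emb_inj[of f 0] by simp
lemma emb_sum: "emb (sum f A) = (\<Sum>x\<in>A. emb (f x))"
  by (induction A rule: infinite_finite_induct) (auto simp: emb_add)
lemma emb_2: "emb 2 = 2" using emb_add[of 1 1] by simp

lemma Sset_emb [simp]: "emb c \<in> Sset" by (simp add: Sset_def)
lemma Sset_add: "x \<in> Sset \<Longrightarrow> y \<in> Sset \<Longrightarrow> x + y \<in> Sset"
  by (auto simp: Sset_def emb_add[symmetric])
lemma Sset_mult: "x \<in> Sset \<Longrightarrow> y \<in> Sset \<Longrightarrow> x * y \<in> Sset"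
  by (auto simp: Sset_def emb_mult[symmetric])

lemma Iset_mem: "\<sigma> \<in> Iset n \<Longrightarrow> i \<in> set \<sigma> \<Longrightarrow> 1 \<le> i \<and> i \<le> n"
  by (auto simp: Iset_def)

lemma Iset_0: "Iset 0 = {[]}"
  by (auto simp: Iset_def)

lemma finite_Iset: "finite (Iset n)"
proof -
  have "Iset n \<subseteq> {xs. set xs \<subseteq> {1..n} \<and> length xs \<le> n}"
  proof
    fix xs assume "xs \<in> Iset n"
    hence d: "distinct xs" and s: "set xs \<subseteq> {1..n}"
      by (auto simp: Iset_def strict_sorted_iff)
    have "length xs = card (set xs)" using d by (simp add: distinct_card)
    also have "\<dots> \<le> card {1..n}" using s by (intro card_mono) auto
    finally show "xs \<in> {xs. set xs \<subseteq> {1..n} \<and> length xs \<le> n}" using s by auto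
  qed
  thus ?thesis by (rule finite_subset) (rule finite_lists_length_le, simp)
qed

lemma snoc_Iset: "\<tau> \<in> Iset n \<Longrightarrow> \<tau> @ [Suc n] \<in> Iset (Suc n)"
  by (auto simp: Iset_def sorted_wrt_append)

lemma snoc_notin_Iset: "\<tau> @ [Suc n] \<notin> Iset n"
  by (auto simp: Iset_def)

lemma Iset_mono: "\<tau> \<in> Iset n \<Longrightarrow> \<tau> \<in> Iset (Suc n)"
  by (auto simp: Iset_def)

lemma Iset_Suc_cases:
  assumes "\<sigma> \<in> Iset (Suc n)"
  shows "\<sigma> \<in> Iset n \<or> (\<exists>\<tau>\<in>Iset n. \<sigma> = \<tau> @ [Suc n])"
proof (cases "Suc n \<in> set \<sigma>")
  case False
  have "set \<sigma> \<subseteq> {1..n}"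
  proof
    fix x assume "x \<in> set \<sigma>"
    then have "1 \<le> x \<and> x \<le> Suc n" "x \<noteq> Suc n" using assms False by (auto simp: Iset_def)
    then show "x \<in> {1..n}" by auto
  qed
  then show ?thesis using assms by (auto simp: Iset_def)
next
  case True
  then have ne: "\<sigma> \<noteq> []" by auto
  let ?b = "butlast \<sigma>"
  have eq: "\<sigma> = ?b @ [last \<sigma>]" using ne by simp
  have sw: "sorted_wrt (<) (?b @ [last \<sigma>])" using assms eq by (simp add: Iset_def)
  have lt: "\<forall>x\<in>set ?b. x < last \<sigma>" using sw by (simp add: sorted_wrt_append)
  have le: "last \<sigma> \<le> Suc n" using assms last_in_set[OF ne] by (auto simp: Iset_def)
  have "last \<sigma> = Suc n"
  proof (rule ccontr)
    assume "last \<sigma> \<noteq> Suc n"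
    then have "Suc n \<in> set ?b" using True eq by (metis Un_iff empty_iff empty_set insert_iff list.set(2) set_append)
    then show False using lt le by auto
  qed
  moreover have "?b \<in> Iset n"
  proof -
    have "sorted_wrt (<) ?b" using sw by (simp add: sorted_wrt_append)
    moreover have "set ?b \<subseteq> {1..n}"
    proof
      fix x assume x: "x \<in> set ?b"
      then have "x \<in> set \<sigma>" by (rule in_set_butlastD)
      then have "1 \<le> x" using assms by (auto simp: Iset_def)
      moreover have "x < Suc n" using lt x \<open>last \<sigma> = Suc n\<close> by auto
      ultimately show "x \<in> {1..n}" by auto
    qed
    ultimately show ?thesis by (simp add: Iset_def)
  qed
  ultimately show ?thesis using eq by metis
qed

lemma sum_Iset_Suc:
  "(\<Sum>\<sigma>\<in>Iset (Suc n). f \<sigma>) = (\<Sum>\<tau>\<in>Iset n. f \<tau> + f (\<tau> @ [Suc n]))"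
proof -
  have e: "Iset (Suc n) = Iset n \<union> (\<lambda>\<tau>. \<tau> @ [Suc n]) ` Iset n"
    using Iset_Suc_cases Iset_mono snoc_Iset by blast
  have d: "Iset n \<inter> (\<lambda>\<tau>. \<tau> @ [Suc n]) ` Iset n = {}" using snoc_notin_Iset by blast
  have "(\<Sum>\<sigma>\<in>Iset (Suc n). f \<sigma>) = (\<Sum>\<sigma>\<in>Iset n. f \<sigma>) + (\<Sum>\<sigma>\<in>(\<lambda>\<tau>. \<tau> @ [Suc n]) ` Iset n. f \<sigma>)"
    unfolding e by (rule sum.union_disjoint) (auto simp: finite_Iset d)
  also have "(\<Sum>\<sigma>\<in>(\<lambda>\<tau>. \<tau> @ [Suc n]) ` Iset n. f \<sigma>) = (\<Sum>\<tau>\<in>Iset n. f (\<tau> @ [Suc n]))"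
    by (rule sum.reindex_cong[where l="\<lambda>\<tau>. \<tau> @ [Suc n]"]) (auto simp: inj_on_def)
  finally show ?thesis by (simp add: sum.distrib)
qed

lemma Delta_Iset: "\<tau> \<in> Iset n \<Longrightarrow> Delta (Suc n) z \<tau> = z \<tau>"
proof -
  assume a: "\<tau> \<in> Iset n"
  have "\<not> (\<tau> \<noteq> [] \<and> last \<tau> = Suc n)"
  proof
    assume "\<tau> \<noteq> [] \<and> last \<tau> = Suc n"
    then have "Suc n \<in> set \<tau>" by (metis last_in_set)
    then show False using Iset_mem[OF a] by fastforce
  qed
  then show ?thesis by (metis Delta_def)
qed

lemma Delta_snoc: "Delta l z (\<tau> @ [l]) = z \<tau>"
  unfolding Delta_def by simp

definition vanish :: "nat \<Rightarrow> (nat list \<Rightarrow> 'a::zero) \<Rightarrow> bool" where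
  "vanish n z \<longleftrightarrow> (\<forall>\<sigma>. \<sigma> \<notin> Iset n \<longrightarrow> z \<sigma> = 0)"

lemma vanish_Delta:
  assumes "vanish n z" "\<sigma> \<notin> Iset (Suc n)"
  shows "Delta (Suc n) z \<sigma> = 0"
proof (cases "\<sigma> \<noteq> [] \<and> last \<sigma> = Suc n")
  case True
  then have "\<sigma> = butlast \<sigma> @ [Suc n]" by (metis append_butlast_last_id)
  then have "butlast \<sigma> \<notin> Iset n" using assms(2) snoc_Iset by metis
  then show ?thesis using True assms(1) by (simp add: Delta_def vanish_def)
next
  case False
  then have "\<sigma> \<notin> Iset n" using assms(2) Iset_mono by blast
  then show ?thesis using False assms(1) unfolding Delta_def vanish_def by auto
qed


definition deg :: "('a \<Rightarrow>\<^sub>0 nat) \<Rightarrow> nat" where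
  "deg m = (\<Sum>v\<in>Poly_Mapping.keys m. Poly_Mapping.lookup m v)"

lemma homog_iff: "homog k f \<longleftrightarrow> (\<forall>m\<in>Poly_Mapping.keys f. 2 * int (deg m) = k)"
  by (simp add: homog_def deg_def)

lemma deg_superset:
  assumes "finite K" "Poly_Mapping.keys m \<subseteq> K"
  shows "deg m = (\<Sum>v\<in>K. Poly_Mapping.lookup m v)"
  unfolding deg_def
proof (rule sum.mono_neutral_left[OF assms(1) assms(2)])
  show "\<forall>i\<in>K - Poly_Mapping.keys m. Poly_Mapping.lookup m i = 0"
    by (simp add: in_keys_iff)
qed

lemma deg_add: "deg (a + b) = deg a + deg b"
proof -
  let ?K = "Poly_Mapping.keys a \<union> Poly_Mapping.keys b"
  have fk: "finite ?K" by simp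
  have "deg (a + b) = (\<Sum>v\<in>?K. Poly_Mapping.lookup (a + b) v)"
    by (rule deg_superset[OF fk keys_add])
  also have "\<dots> = (\<Sum>v\<in>?K. Poly_Mapping.lookup a v) + (\<Sum>v\<in>?K. Poly_Mapping.lookup b v)"
    by (simp add: lookup_add sum.distrib)
  also have "(\<Sum>v\<in>?K. Poly_Mapping.lookup a v) = deg a"
    by (rule deg_superset[symmetric, OF fk]) simp
  also have "(\<Sum>v\<in>?K. Poly_Mapping.lookup b v) = deg b"
    by (rule deg_superset[symmetric, OF fk]) simp
  finally show ?thesis .
qed

lemma keys_multE:
  assumes "m \<in> Poly_Mapping.keys (f * g)"
  obtains x y where "m = x + y" "x \<in> Poly_Mapping.keys f" "y \<in> Poly_Mapping.keys g"
proof -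
  have "m \<in> {a + b | a b. a \<in> Poly_Mapping.keys f \<and> b \<in> Poly_Mapping.keys g}"
    by (rule subsetD[OF keys_mult assms])
  then show ?thesis using that by blast
qed

lemma homog_0 [simp]: "homog k 0" by (simp add: homog_def)

lemma homog_add: "homog k f \<Longrightarrow> homog k g \<Longrightarrow> homog k (f + g)"
  unfolding homog_def using subsetD[OF keys_add] by (metis Un_iff)

lemma homog_uminus: "homog k f \<Longrightarrow> homog k (- f)"
  unfolding homog_def by (simp only: keys_minus)

lemma homog_diff: "homog k f \<Longrightarrow> homog k g \<Longrightarrow> homog k (f - g)"
  unfolding homog_def using subsetD[OF keys_diff] by (metis Un_iff)

lemma homog_mult:
  fixes f g :: "('n option \<Rightarrow>\<^sub>0 nat) \<Rightarrow>\<^sub>0 't::comm_ring_1"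
  assumes "homog a f" "homog b g" shows "homog (a + b) (f * g)"
  unfolding homog_iff
proof
  fix m assume "m \<in> Poly_Mapping.keys (f * g)"
  then obtain x y where "m = x + y" "x \<in> Poly_Mapping.keys f" "y \<in> Poly_Mapping.keys g"
    by (rule keys_multE)
  moreover have "2 * int (deg x) = a" "2 * int (deg y) = b"
    using assms \<open>x \<in> _\<close> \<open>y \<in> _\<close> unfolding homog_iff by auto
  ultimately show "2 * int (deg m) = a + b" by (simp add: deg_add)
qed

definition hpn :: "int \<Rightarrow> ((('a \<Rightarrow>\<^sub>0 nat) \<Rightarrow>\<^sub>0 't::zero)) \<Rightarrow> (('a \<Rightarrow>\<^sub>0 nat) \<Rightarrow>\<^sub>0 't)" where
  "hpn n f = Poly_Mapping.mapp (\<lambda>m v. if 2 * int (deg m) = n then v else 0) f"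

lemma lookup_hpn: "Poly_Mapping.lookup (hpn n f) m = (if 2 * int (deg m) = n then Poly_Mapping.lookup f m else 0)"
  by (auto simp: hpn_def lookup_mapp when_def in_keys_iff)

lemma homog_hpn: "homog n (hpn n f)"
  unfolding homog_iff by (auto simp: in_keys_iff lookup_hpn split: if_splits)

lemma hpn_decomp:
  fixes c :: "('a \<Rightarrow>\<^sub>0 nat) \<Rightarrow>\<^sub>0 't::comm_monoid_add"
  shows "c = (\<Sum>n\<in>(\<lambda>m. 2 * int (deg m)) ` Poly_Mapping.keys c. hpn n c)"
proof (rule poly_mapping_eqI)
  fix m
  have "Poly_Mapping.lookup (\<Sum>n\<in>(\<lambda>m. 2 * int (deg m)) ` Poly_Mapping.keys c. hpn n c) m
      = (\<Sum>n\<in>(\<lambda>m. 2 * int (deg m)) ` Poly_Mapping.keys c. if 2 * int (deg m) = n then Poly_Mapping.lookup c m else 0)"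
    by (simp add: lookup_sum lookup_hpn)
  also have "\<dots> = Poly_Mapping.lookup c m"
    by (subst sum.delta') (auto simp: in_keys_iff)
  finally show "Poly_Mapping.lookup c m = Poly_Mapping.lookup (\<Sum>n\<in>(\<lambda>m. 2 * int (deg m)) ` Poly_Mapping.keys c. hpn n c) m" by simp
qed

lemma homog_cancel:
  fixes \<beta> f :: "('n::{finite,linorder}, 't::idom) spoly"
  assumes hb: "homog 2 \<beta>" and nz: "\<beta> \<noteq> 0" and hf: "homog k (\<beta> * f)"
  shows "homog (k - 2) f"
  unfolding homog_iff
proof (rule ballI, rule ccontr)
  fix m0 assume m0: "m0 \<in> Poly_Mapping.keys f" and ne: "2 * int (deg m0) \<noteq> k - 2"
  define j where "j = 2 * int (deg m0)"
  define fj where "fj = hpn j f"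
  define fr where "fr = f - fj"
  have lfr: "Poly_Mapping.lookup fr m = (if 2 * int (deg m) = j then 0 else Poly_Mapping.lookup f m)" for m
    by (simp add: fr_def fj_def lookup_minus lookup_hpn)
  have kfj: "2 * int (deg m) = j + 2" if "m \<in> Poly_Mapping.keys (\<beta> * fj)" for m
  proof -
    from that obtain x y where "m = x + y" "x \<in> Poly_Mapping.keys \<beta>" "y \<in> Poly_Mapping.keys fj"
      by (rule keys_multE)
    then show ?thesis using hb by (auto simp: homog_iff deg_add fj_def in_keys_iff lookup_hpn split: if_splits)
  qed
  have kfr: "2 * int (deg m) \<noteq> j + 2" if "m \<in> Poly_Mapping.keys (\<beta> * fr)" for m
  proof -
    from that obtain x y where "m = x + y" "x \<in> Poly_Mapping.keys \<beta>" "y \<in> Poly_Mapping.keys fr"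
      by (rule keys_multE)
    then show ?thesis using hb by (auto simp: homog_iff deg_add in_keys_iff lfr split: if_splits)
  qed
  have "\<beta> * fj = 0"
  proof (rule poly_mapping_eqI)
    fix m
    show "Poly_Mapping.lookup (\<beta> * fj) m = Poly_Mapping.lookup 0 m"
    proof (cases "m \<in> Poly_Mapping.keys (\<beta> * fj)")
      case False then show ?thesis by (simp add: in_keys_iff)
    next
      case True
      then have d: "2 * int (deg m) = j + 2" by (rule kfj)
      then have "m \<notin> Poly_Mapping.keys (\<beta> * fr)" using kfr by blast
      moreover have "m \<notin> Poly_Mapping.keys (\<beta> * f)" using hf d ne j_def by (auto simp: homog_iff)
      moreover have "\<beta> * f = \<beta> * fj + \<beta> * fr" by (simp add: fr_def algebra_simps)
      ultimately show ?thesis by (simp add: in_keys_iff lookup_add)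
    qed
  qed
  then have "fj = 0" using nz by simp
  moreover have "Poly_Mapping.lookup fj m0 \<noteq> 0" using m0 by (simp add: fj_def lookup_hpn j_def in_keys_iff)
  ultimately show False by simp
qed

lemma deg_single1: "deg (Poly_Mapping.single i (1::nat)) = 1"
  by (simp add: deg_def)

lemma homog_linX: "homog 2 (linX x :: ('n::finite, 't::comm_ring_1) spoly)"
proof -
  have "Poly_Mapping.keys (linX x :: ('n, 't) spoly) \<subseteq> (\<Union>i\<in>UNIV. Poly_Mapping.keys (Poly_Mapping.single (Poly_Mapping.single i (1::nat)) (tensT x i :: 't)))"
    unfolding linX_def linS_def by (rule keys_sum)
  also have "\<dots> \<subseteq> range (\<lambda>i. Poly_Mapping.single i (1::nat))"
  proof
    fix m assume "m \<in> (\<Union>i\<in>UNIV. Poly_Mapping.keys (Poly_Mapping.single (Poly_Mapping.single i (1::nat)) (tensT x i :: 't)))"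
    then obtain i where "m \<in> Poly_Mapping.keys (Poly_Mapping.single (Poly_Mapping.single i (1::nat)) (tensT x i :: 't))" by blast
    then have "m = Poly_Mapping.single i 1" by (simp split: if_splits)
    then show "m \<in> range (\<lambda>i. Poly_Mapping.single i (1::nat))" by blast
  qed
  finally have k: "Poly_Mapping.keys (linX x :: ('n, 't) spoly) \<subseteq> range (\<lambda>i. Poly_Mapping.single i (1::nat))" .
  show ?thesis unfolding homog_iff
  proof
    fix m assume "m \<in> Poly_Mapping.keys (linX x :: ('n, 't) spoly)"
    then obtain i where "m = Poly_Mapping.single i 1" using k by blast
    then show "2 * int (deg m) = 2" by (simp only: deg_single1)
  qed
qed

lemma single1_eq: "Poly_Mapping.single i (1::nat) = Poly_Mapping.single j 1 \<longleftrightarrow> i = j"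
  by (metis lookup_single_eq lookup_single_not_eq one_neq_zero)

lemma lookup_linX: "Poly_Mapping.lookup (linX x :: ('n::finite, 't::comm_ring_1) spoly) (Poly_Mapping.single j 1) = tensT x j"
proof -
  have "Poly_Mapping.lookup (linX x :: ('n, 't) spoly) (Poly_Mapping.single j 1)
     = (\<Sum>i\<in>UNIV. Poly_Mapping.lookup (Poly_Mapping.single (Poly_Mapping.single i (1::nat)) (tensT x i :: 't)) (Poly_Mapping.single j 1))"
    by (simp only: linX_def linS_def lookup_sum)
  also have "\<dots> = (\<Sum>i\<in>UNIV. if i = j then tensT x i else 0)"
    by (rule sum.cong[OF refl]) (simp only: lookup_single when_def single1_eq)
  also have "\<dots> = tensT x j" by (subst sum.delta) auto
  finally show ?thesis .
qed

lemma linX_nonzero: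
  fixes x :: "(int, 'n::finite) vec \<times> int"
  assumes a: "tensT x j \<noteq> (0::'t::comm_ring_1)"
  shows "(linX x :: ('n, 't) spoly) \<noteq> 0"
proof
  assume b: "(linX x :: ('n, 't) spoly) = 0"
  have "tensT x j = Poly_Mapping.lookup (linX x :: ('n, 't) spoly) (Poly_Mapping.single j 1)"
    by (simp only: lookup_linX)
  also have "\<dots> = 0" by (simp only: b lookup_zero)
  finally show False using a by simp
qed


definition negp :: "('a::uminus \<times> 'b::uminus) \<Rightarrow> 'a \<times> 'b" where
  "negp x = (- fst x, - snd x)"

lemma pair_neg: "pair (- x) v = - pair x v" by (simp add: pair_def sum_negf)

lemma act_negp: "act cor t (negp x) = negp (act cor t x)"
  by (simp add: act_def negp_def pair_neg vec_eq_iff algebra_simps)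

lemma ev_negp: "ev cor s \<tau> (negp x) = negp (ev cor s \<tau> x)"
  by (induction \<tau>) (simp_all add: ev_def act_negp)

lemma ev_snoc: "ev cor s (\<tau> @ [k]) x = ev cor s \<tau> (act cor (s ! (k - 1)) x)"
  by (simp add: ev_def)

lemma ev_Cons: "ev cor s (i # \<tau>) x = act cor (s ! (i - 1)) (ev cor s \<tau> x)"
  by (simp add: ev_def)

lemma tensT_negp: "(tensT (negp x) :: _ \<Rightarrow> 't::comm_ring_1) = (\<lambda>j. - tensT x j)"
  by (auto simp: tensT_def negp_def fun_eq_iff split: option.splits)

lemma linX_negp: "(linX (negp x) :: ('n::finite, 't::comm_ring_1) spoly) = - linX x"
  by (simp add: linX_def linS_def tensT_negp single_uminus sum_negf)

lemma fst_act: "fst (act cor t x) = refl cor (fst t) (fst x)"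
  by (simp add: act_def refl_def)

lemma refl_self: "pair a (cor a) = 2 \<Longrightarrow> refl cor a a = - a"
  by (simp add: refl_def vec_eq_iff)

lemma ev_in_R:
  assumes rs: "root_system R cor" and hs: "\<forall>i\<in>set \<tau>. fst (s ! (i - 1)) \<in> R" and x: "fst x \<in> R"
  shows "fst (ev cor s \<tau> x) \<in> R"
  using hs
proof (induction \<tau>)
  case Nil then show ?case using x by (simp add: ev_def)
next
  case (Cons i \<tau>)
  then have "fst (ev cor s \<tau> x) \<in> R" "fst (s ! (i - 1)) \<in> R" by auto
  then show ?case using rs by (simp add: ev_Cons fst_act root_system_def)
qed

locale rsetup =
  fixes R :: "((int, 'n::{finite,linorder}) vec) set"
    and cor :: "(int, 'n) vec \<Rightarrow> (int, 'n) vec"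
    and P :: "((int, 'n) vec) set"
    and g :: "(int, 'n) vec"
  assumes rs: "root_system R cor" and base: "is_base R P" and hr: "highest_root R P g"
begin

lemma P_R: "P \<subseteq> R" using base by (simp add: is_base_def)
lemma g_R: "g \<in> R" using hr by (simp add: highest_root_def)
lemma pair2: "a \<in> R \<Longrightarrow> pair a (cor a) = 2" using rs by (simp add: root_system_def)

lemma Shat_fst: "t \<in> Shat P g \<Longrightarrow> fst t \<in> R"
  using P_R g_R by (auto simp: Shat_def)

lemma sroot_R: "t \<in> Shat P g \<Longrightarrow> fst (sroot t) \<in> R"
proof -
  assume t: "t \<in> Shat P g"
  have "refl cor g g = - g" using refl_self[of g cor] pair2[OF g_R] by blast
  then have "- g \<in> R" using rs g_R unfolding root_system_def by metis
  then show ?thesis using t P_R by (auto simp: Shat_def sroot_def)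
qed

lemma act_sroot: "t \<in> Shat P g \<Longrightarrow> act cor t (sroot t) = negp (sroot t)"
proof -
  assume t: "t \<in> Shat P g"
  then consider a where "t = (a, 0)" "a \<in> P" | "t = (g, 1)" by (auto simp: Shat_def)
  then show ?thesis
  proof cases
    case 1
    then have "pair a (cor a) = 2" using pair2 P_R by auto
    then show ?thesis using 1 by (simp add: act_def sroot_def negp_def vec_eq_iff)
  next
    case 2
    have "pair g (cor g) = 2" using pair2 g_R by auto
    then show ?thesis using 2 by (simp add: act_def sroot_def negp_def vec_eq_iff pair_neg)
  qed
qed

definition bet :: "(((int, 'n) vec) \<times> int) \<Rightarrow> (((int, 'n) vec) \<times> int) list \<Rightarrow> nat list \<Rightarrow> ('n, 't::idom) spoly" where
  "bet t rs \<sigma> = linX (ev cor (rev (t # rs)) \<sigma> (sroot t))"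

lemma bet_snoc:
  assumes "t \<in> Shat P g"
  shows "bet t rs (\<tau> @ [Suc (length rs)]) = - bet t rs \<tau>"
proof -
  have "rev (t # rs) ! (Suc (length rs) - 1) = t" by (simp add: nth_append)
  then show ?thesis using assms
    by (simp add: bet_def ev_snoc act_sroot ev_negp linX_negp)
qed

lemma bet_root:
  assumes "t \<in> Shat P g" "set rs \<subseteq> Shat P g" "\<tau> \<in> Iset (length rs)"
  shows "ev cor (rev (t # rs)) \<tau> (sroot t) \<in> affine_roots R"
proof -
  have "\<forall>i\<in>set \<tau>. fst (rev (t # rs) ! (i - 1)) \<in> R"
  proof
    fix i assume "i \<in> set \<tau>"
    then have i: "1 \<le> i" "i \<le> length rs" using Iset_mem assms(3) by blast+
    then have "rev (t # rs) ! (i - 1) \<in> set (rev (t # rs))" by (intro nth_mem) simp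
    then have "rev (t # rs) ! (i - 1) \<in> Shat P g" using assms by auto
    then show "fst (rev (t # rs) ! (i - 1)) \<in> R" by (rule Shat_fst)
  qed
  then have "fst (ev cor (rev (t # rs)) \<tau> (sroot t)) \<in> R"
    by (rule ev_in_R[OF rs _ sroot_R[OF assms(1)]])
  then show ?thesis unfolding affine_roots_def by (metis (mono_tags, lifting) mem_Collect_eq prod.collapse)
qed

end


lemma Dens_1: "1 \<in> Dens R"
  unfolding Dens_def by (rule CollectI, rule exI[of _ 0], rule exI[of _ "[]"]) simp

lemma Dens_mult: "d \<in> Dens R \<Longrightarrow> d' \<in> Dens R \<Longrightarrow> d * d' \<in> Dens R"
proof -
  assume "d \<in> Dens R" "d' \<in> Dens R"
  then obtain k bs k' bs' where d: "d = 2 ^ k * prod_list (map linX bs)" "set bs \<subseteq> affine_roots R"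
    and d': "d' = 2 ^ k' * prod_list (map linX bs')" "set bs' \<subseteq> affine_roots R"
    unfolding Dens_def by blast
  have "d * d' = 2 ^ (k + k') * prod_list (map linX (bs @ bs'))"
    by (simp add: d d' power_add algebra_simps)
  moreover have "set (bs @ bs') \<subseteq> affine_roots R" using d d' by auto
  ultimately show ?thesis unfolding Dens_def by blast
qed

lemma Dens_root: "x \<in> affine_roots R \<Longrightarrow> linX x \<in> Dens R"
proof -
  assume "x \<in> affine_roots R"
  moreover have "linX x = 2 ^ 0 * prod_list (map linX [x])" by simp
  ultimately show ?thesis unfolding Dens_def by (metis (mono_tags, lifting) empty_set insert_subset list.set(2) mem_Collect_eq empty_subsetI)
qed

lemma Q_emb: "emb c \<in> Qset R"
  unfolding Qset_def emb_def using Dens_1 by blast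

lemma Q_0: "0 \<in> Qset R" using Q_emb[of 0 R] by simp

lemma Q_cases: "q \<in> Qset R \<Longrightarrow> (\<And>f d. q = Fract f d \<Longrightarrow> d \<in> Dens R \<Longrightarrow> thesis) \<Longrightarrow> thesis"
  unfolding Qset_def by blast

lemma Q_add: "p \<in> Qset R \<Longrightarrow> q \<in> Qset R \<Longrightarrow> p + q \<in> Qset R"
proof -
  assume p: "p \<in> Qset R" and q: "q \<in> Qset R"
  obtain f d where pf: "p = Fract f d" "d \<in> Dens R" using p by (rule Q_cases)
  obtain f' d' where qf: "q = Fract f' d'" "d' \<in> Dens R" using q by (rule Q_cases)
  show ?thesis
  proof (cases "d = 0 \<or> d' = 0")
    case True
    then show ?thesis using p q pf qf by (auto simp: fract_collapse)
  next
    case False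
    then have "p + q = Fract (f * d' + f' * d) (d * d')" using pf qf by simp
    then show ?thesis using Dens_mult[OF pf(2) qf(2)] unfolding Qset_def by blast
  qed
qed

lemma Q_mult: "p \<in> Qset R \<Longrightarrow> q \<in> Qset R \<Longrightarrow> p * q \<in> Qset R"
proof -
  assume p: "p \<in> Qset R" and q: "q \<in> Qset R"
  obtain f d where pf: "p = Fract f d" "d \<in> Dens R" using p by (rule Q_cases)
  obtain f' d' where qf: "q = Fract f' d'" "d' \<in> Dens R" using q by (rule Q_cases)
  have "p * q = Fract (f * f') (d * d')" using pf qf by simp
  then show ?thesis using Dens_mult[OF pf(2) qf(2)] unfolding Qset_def by blast
qed

lemma Q_uminus: "p \<in> Qset R \<Longrightarrow> - p \<in> Qset R"
proof -
  assume p: "p \<in> Qset R"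
  obtain f d where pf: "p = Fract f d" "d \<in> Dens R" using p by (rule Q_cases)
  have "- p = Fract (- f) d" using pf by simp
  then show ?thesis using pf(2) unfolding Qset_def by blast
qed

lemma Q_diff: "p \<in> Qset R \<Longrightarrow> q \<in> Qset R \<Longrightarrow> p - q \<in> Qset R"
  using Q_add[of p R "- q"] Q_uminus[of q R] by simp

lemma Q_div: "p \<in> Qset R \<Longrightarrow> x \<in> affine_roots R \<Longrightarrow> p / emb (linX x) \<in> Qset R"
proof -
  assume p: "p \<in> Qset R" and x: "x \<in> affine_roots R"
  obtain f d where pf: "p = Fract f d" "d \<in> Dens R" using p by (rule Q_cases)
  have "p / emb (linX x) = Fract (f * 1) (d * linX x)" using pf by (simp add: emb_def)
  then show ?thesis using Dens_mult[OF pf(2) Dens_root[OF x]] unfolding Qset_def by blast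
qed


lemma Delta_fun1: "Delta l (\<lambda>\<sigma>. f (a \<sigma>)) \<sigma> = f (Delta l a \<sigma>)"
  by (simp add: Delta_def)
lemma Delta_fun2: "Delta l (\<lambda>\<sigma>. f (a \<sigma>) (b \<sigma>)) \<sigma> = f (Delta l a \<sigma>) (Delta l b \<sigma>)"
  by (simp add: Delta_def)
lemma Delta_const: "Delta l (\<lambda>\<sigma>. c) \<sigma> = c"
  by (simp add: Delta_def)

definition stepX :: "nat \<Rightarrow> (nat list \<Rightarrow> ('n::{finite,linorder}, 't::idom) spoly)
   \<Rightarrow> (nat list \<Rightarrow> ('n, 't) spoly) set \<Rightarrow> (nat list \<Rightarrow> ('n, 't) spoly) set" where
  "stepX l \<beta> A = {(\<lambda>\<sigma>. Delta l a \<sigma> + \<beta> \<sigma> * Delta l b \<sigma>) | a b. a \<in> A \<and> b \<in> A}"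

definition stepY :: "nat \<Rightarrow> (nat list \<Rightarrow> ('n::{finite,linorder}, 't::idom) spoly)
   \<Rightarrow> (nat list \<Rightarrow> ('n, 't) spoly fract) set \<Rightarrow> (nat list \<Rightarrow> ('n, 't) spoly fract) set" where
  "stepY l \<beta> B = {(\<lambda>\<sigma>. Delta l a \<sigma> + Delta l b \<sigma> / emb (\<beta> \<sigma>)) | a b. a \<in> B \<and> b \<in> B}"

definition modX :: "(nat list \<Rightarrow> ('n::{finite,linorder}, 't::idom) spoly) set \<Rightarrow> bool" where
  "modX A \<longleftrightarrow> (\<lambda>\<sigma>. 0) \<in> A \<and> (\<forall>x\<in>A. \<forall>y\<in>A. (\<lambda>\<sigma>. x \<sigma> + y \<sigma>) \<in> A) \<and> (\<forall>c. \<forall>x\<in>A. (\<lambda>\<sigma>. c * x \<sigma>) \<in> A)"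

definition modY :: "(nat list \<Rightarrow> ('n::{finite,linorder}, 't::idom) spoly fract) set \<Rightarrow> bool" where
  "modY B \<longleftrightarrow> (\<lambda>\<sigma>. 0) \<in> B \<and> (\<forall>x\<in>B. \<forall>y\<in>B. (\<lambda>\<sigma>. x \<sigma> + y \<sigma>) \<in> B) \<and> (\<forall>c. \<forall>x\<in>B. (\<lambda>\<sigma>. emb c * x \<sigma>) \<in> B)"

definition vanS :: "nat \<Rightarrow> (nat list \<Rightarrow> 'a::zero) set \<Rightarrow> bool" where
  "vanS n A \<longleftrightarrow> (\<forall>x\<in>A. vanish n x)"

definition DualS :: "((int, 'n::{finite,linorder}) vec) set \<Rightarrow> nat \<Rightarrow> (nat list \<Rightarrow> ('n, 't::idom) spoly) set
    \<Rightarrow> (nat list \<Rightarrow> ('n, 't) spoly fract) set" where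
  "DualS R n A = {z. vanish n z \<and> (\<forall>\<sigma>. z \<sigma> \<in> Qset R) \<and> (\<forall>m\<in>A. (\<Sum>\<sigma>\<in>Iset n. z \<sigma> * emb (m \<sigma>)) \<in> Sset)}"

definition rep :: "nat \<Rightarrow> (nat list \<Rightarrow> ('n::{finite,linorder}, 't::idom) spoly) set
   \<Rightarrow> ((nat list \<Rightarrow> ('n, 't) spoly) \<Rightarrow> ('n, 't) spoly) \<Rightarrow> (nat list \<Rightarrow> ('n, 't) spoly fract) \<Rightarrow> bool" where
  "rep n A \<phi> y \<longleftrightarrow> (\<forall>x\<in>A. emb (\<phi> x) = (\<Sum>\<sigma>\<in>Iset n. emb (x \<sigma>) * y \<sigma>))"

definition lin :: "(nat list \<Rightarrow> ('n::{finite,linorder}, 't::idom) spoly) set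
   \<Rightarrow> ((nat list \<Rightarrow> ('n, 't) spoly) \<Rightarrow> ('n, 't) spoly) \<Rightarrow> bool" where
  "lin A \<phi> \<longleftrightarrow> (\<forall>x\<in>A. \<forall>y\<in>A. \<phi> (\<lambda>\<sigma>. x \<sigma> + y \<sigma>) = \<phi> x + \<phi> y) \<and> (\<forall>a. \<forall>x\<in>A. \<phi> (\<lambda>\<sigma>. a * x \<sigma>) = a * \<phi> x)"

locale step =
  fixes n :: nat and \<beta> :: "nat list \<Rightarrow> ('n::{finite,linorder}, 't::idom) spoly"
    and hh :: "('n, 't) spoly"
  assumes b_snoc: "\<And>\<tau>. \<beta> (\<tau> @ [Suc n]) = - \<beta> \<tau>"
    and b_nz: "\<And>\<tau>. \<tau> \<in> Iset n \<Longrightarrow> \<beta> \<tau> \<noteq> 0"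
    and b_hom: "\<And>\<tau>. \<tau> \<in> Iset n \<Longrightarrow> homog 2 (\<beta> \<tau>)"
    and half: "2 * hh = 1"
begin

lemma half_emb: "2 * emb hh = 1"
  using half by (metis emb_1 emb_2 emb_mult)

lemma emb_b_nz: "\<tau> \<in> Iset n \<Longrightarrow> emb (\<beta> \<tau>) \<noteq> 0"
  using b_nz emb_eq_0 by blast

lemma modX_step: "modX A \<Longrightarrow> modX (stepX (Suc n) \<beta> A)"
  unfolding modX_def
proof (intro conjI ballI allI)
  assume m: "(\<lambda>\<sigma>. 0) \<in> A \<and> (\<forall>x\<in>A. \<forall>y\<in>A. (\<lambda>\<sigma>. x \<sigma> + y \<sigma>) \<in> A) \<and> (\<forall>c. \<forall>x\<in>A. (\<lambda>\<sigma>. c * x \<sigma>) \<in> A)"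
  show "(\<lambda>\<sigma>. 0) \<in> stepX (Suc n) \<beta> A"
    unfolding stepX_def using m by (auto simp: Delta_const intro!: exI[of _ "\<lambda>\<sigma>. 0"])
  fix x y assume "x \<in> stepX (Suc n) \<beta> A" "y \<in> stepX (Suc n) \<beta> A"
  then obtain a b a' b' where x: "x = (\<lambda>\<sigma>. Delta (Suc n) a \<sigma> + \<beta> \<sigma> * Delta (Suc n) b \<sigma>)" "a \<in> A" "b \<in> A"
    and y: "y = (\<lambda>\<sigma>. Delta (Suc n) a' \<sigma> + \<beta> \<sigma> * Delta (Suc n) b' \<sigma>)" "a' \<in> A" "b' \<in> A"
    unfolding stepX_def by blast
  have "(\<lambda>\<sigma>. x \<sigma> + y \<sigma>) = (\<lambda>\<sigma>. Delta (Suc n) (\<lambda>\<sigma>. a \<sigma> + a' \<sigma>) \<sigma> + \<beta> \<sigma> * Delta (Suc n) (\<lambda>\<sigma>. b \<sigma> + b' \<sigma>) \<sigma>)"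
    by (simp add: x y Delta_fun2 algebra_simps)
  then show "(\<lambda>\<sigma>. x \<sigma> + y \<sigma>) \<in> stepX (Suc n) \<beta> A"
    unfolding stepX_def using m x y by blast
next
  fix c x
  assume m: "(\<lambda>\<sigma>. 0) \<in> A \<and> (\<forall>x\<in>A. \<forall>y\<in>A. (\<lambda>\<sigma>. x \<sigma> + y \<sigma>) \<in> A) \<and> (\<forall>c. \<forall>x\<in>A. (\<lambda>\<sigma>. c * x \<sigma>) \<in> A)"
  assume "x \<in> stepX (Suc n) \<beta> A"
  then obtain a b where x: "x = (\<lambda>\<sigma>. Delta (Suc n) a \<sigma> + \<beta> \<sigma> * Delta (Suc n) b \<sigma>)" "a \<in> A" "b \<in> A"
    unfolding stepX_def by blast
  have "(\<lambda>\<sigma>. c * x \<sigma>) = (\<lambda>\<sigma>. Delta (Suc n) (\<lambda>\<sigma>. c * a \<sigma>) \<sigma> + \<beta> \<sigma> * Delta (Suc n) (\<lambda>\<sigma>. c * b \<sigma>) \<sigma>)"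
    by (simp add: x Delta_fun1 algebra_simps)
  then show "(\<lambda>\<sigma>. c * x \<sigma>) \<in> stepX (Suc n) \<beta> A"
    unfolding stepX_def using m x by blast
qed

lemma modY_step: "modY B \<Longrightarrow> modY (stepY (Suc n) \<beta> B)"
  unfolding modY_def
proof (intro conjI ballI allI)
  assume m: "(\<lambda>\<sigma>. 0) \<in> B \<and> (\<forall>x\<in>B. \<forall>y\<in>B. (\<lambda>\<sigma>. x \<sigma> + y \<sigma>) \<in> B) \<and> (\<forall>c. \<forall>x\<in>B. (\<lambda>\<sigma>. emb c * x \<sigma>) \<in> B)"
  show "(\<lambda>\<sigma>. 0) \<in> stepY (Suc n) \<beta> B"
    unfolding stepY_def using m by (auto simp: Delta_const intro!: exI[of _ "\<lambda>\<sigma>. 0"])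
  fix x y assume "x \<in> stepY (Suc n) \<beta> B" "y \<in> stepY (Suc n) \<beta> B"
  then obtain a b a' b' where x: "x = (\<lambda>\<sigma>. Delta (Suc n) a \<sigma> + Delta (Suc n) b \<sigma> / emb (\<beta> \<sigma>))" "a \<in> B" "b \<in> B"
    and y: "y = (\<lambda>\<sigma>. Delta (Suc n) a' \<sigma> + Delta (Suc n) b' \<sigma> / emb (\<beta> \<sigma>))" "a' \<in> B" "b' \<in> B"
    unfolding stepY_def by blast
  have "(\<lambda>\<sigma>. x \<sigma> + y \<sigma>) = (\<lambda>\<sigma>. Delta (Suc n) (\<lambda>\<sigma>. a \<sigma> + a' \<sigma>) \<sigma> + Delta (Suc n) (\<lambda>\<sigma>. b \<sigma> + b' \<sigma>) \<sigma> / emb (\<beta> \<sigma>))"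
    by (simp add: x y Delta_fun2 add_divide_distrib algebra_simps)
  then show "(\<lambda>\<sigma>. x \<sigma> + y \<sigma>) \<in> stepY (Suc n) \<beta> B"
    unfolding stepY_def using m x y by blast
next
  fix c x
  assume m: "(\<lambda>\<sigma>. 0) \<in> B \<and> (\<forall>x\<in>B. \<forall>y\<in>B. (\<lambda>\<sigma>. x \<sigma> + y \<sigma>) \<in> B) \<and> (\<forall>c. \<forall>x\<in>B. (\<lambda>\<sigma>. emb c * x \<sigma>) \<in> B)"
  assume "x \<in> stepY (Suc n) \<beta> B"
  then obtain a b where x: "x = (\<lambda>\<sigma>. Delta (Suc n) a \<sigma> + Delta (Suc n) b \<sigma> / emb (\<beta> \<sigma>))" "a \<in> B" "b \<in> B"
    unfolding stepY_def by blast
  have "(\<lambda>\<sigma>. emb c * x \<sigma>) = (\<lambda>\<sigma>. Delta (Suc n) (\<lambda>\<sigma>. emb c * a \<sigma>) \<sigma> + Delta (Suc n) (\<lambda>\<sigma>. emb c * b \<sigma>) \<sigma> / emb (\<beta> \<sigma>))"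
    by (simp add: x Delta_fun1 algebra_simps)
  then show "(\<lambda>\<sigma>. emb c * x \<sigma>) \<in> stepY (Suc n) \<beta> B"
    unfolding stepY_def using m x by blast
qed

lemma vanX_step: assumes v: "vanS n A" shows "vanS (Suc n) (stepX (Suc n) \<beta> A)"
  unfolding vanS_def vanish_def
proof (intro ballI allI impI)
  fix x \<sigma> assume x: "x \<in> stepX (Suc n) \<beta> A" and s: "\<sigma> \<notin> Iset (Suc n)"
  then obtain a b where xd: "x = (\<lambda>\<sigma>. Delta (Suc n) a \<sigma> + \<beta> \<sigma> * Delta (Suc n) b \<sigma>)" "a \<in> A" "b \<in> A"
    unfolding stepX_def by blast
  have "vanish n a" "vanish n b" using v xd by (auto simp: vanS_def)
  then have "Delta (Suc n) a \<sigma> = 0" "Delta (Suc n) b \<sigma> = 0" using vanish_Delta s by blast+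
  then show "x \<sigma> = 0" using xd by simp
qed

lemma vanY_step: assumes v: "vanS n B" shows "vanS (Suc n) (stepY (Suc n) \<beta> B)"
  unfolding vanS_def vanish_def
proof (intro ballI allI impI)
  fix x \<sigma> assume x: "x \<in> stepY (Suc n) \<beta> B" and s: "\<sigma> \<notin> Iset (Suc n)"
  then obtain a b where xd: "x = (\<lambda>\<sigma>. Delta (Suc n) a \<sigma> + Delta (Suc n) b \<sigma> / emb (\<beta> \<sigma>))" "a \<in> B" "b \<in> B"
    unfolding stepY_def by blast
  have "vanish n a" "vanish n b" using v xd by (auto simp: vanS_def)
  then have "Delta (Suc n) a \<sigma> = 0" "Delta (Suc n) b \<sigma> = 0" using vanish_Delta s by blast+
  then show "x \<sigma> = 0" using xd by simp
qed

lemma pair_step: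
  "(\<Sum>\<sigma>\<in>Iset (Suc n). emb (Delta (Suc n) a \<sigma> + \<beta> \<sigma> * Delta (Suc n) b \<sigma>) * z \<sigma>)
   = (\<Sum>\<tau>\<in>Iset n. emb (a \<tau>) * (z \<tau> + z (\<tau> @ [Suc n])) + emb (b \<tau>) * (emb (\<beta> \<tau>) * (z \<tau> - z (\<tau> @ [Suc n]))))"
  unfolding sum_Iset_Suc
  by (rule sum.cong[OF refl]) (simp add: Delta_Iset Delta_snoc b_snoc emb_add emb_mult emb_uminus emb_diff algebra_simps)

lemma yvals:
  fixes a b :: "nat list \<Rightarrow> ('n, 't) spoly fract"
  assumes "\<tau> \<in> Iset n"
  defines "y \<equiv> (\<lambda>\<sigma>. Delta (Suc n) a \<sigma> + Delta (Suc n) b \<sigma> / emb (\<beta> \<sigma>))"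
  shows "y \<tau> = a \<tau> + b \<tau> / emb (\<beta> \<tau>)" "y (\<tau> @ [Suc n]) = a \<tau> - b \<tau> / emb (\<beta> \<tau>)"
    "y \<tau> + y (\<tau> @ [Suc n]) = 2 * a \<tau>" "emb (\<beta> \<tau>) * (y \<tau> - y (\<tau> @ [Suc n])) = 2 * b \<tau>"
proof -
  show 1: "y \<tau> = a \<tau> + b \<tau> / emb (\<beta> \<tau>)" using assms by (simp add: y_def Delta_Iset)
  show 2: "y (\<tau> @ [Suc n]) = a \<tau> - b \<tau> / emb (\<beta> \<tau>)"
    by (simp add: y_def Delta_snoc b_snoc emb_uminus)
  show "y \<tau> + y (\<tau> @ [Suc n]) = 2 * a \<tau>" unfolding 1 2 by simp
  show "emb (\<beta> \<tau>) * (y \<tau> - y (\<tau> @ [Suc n])) = 2 * b \<tau>" unfolding 1 2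
    using emb_b_nz[OF assms(1)] by (simp add: field_simps)
qed

end


context step begin

lemma pair_step':
  "(\<Sum>\<sigma>\<in>Iset (Suc n). z \<sigma> * emb (Delta (Suc n) a \<sigma> + \<beta> \<sigma> * Delta (Suc n) b \<sigma>))
   = (\<Sum>\<tau>\<in>Iset n. emb (a \<tau>) * (z \<tau> + z (\<tau> @ [Suc n])) + emb (b \<tau>) * (emb (\<beta> \<tau>) * (z \<tau> - z (\<tau> @ [Suc n]))))"
  by (subst pair_step[symmetric]) (simp add: mult.commute)

lemma pair_yy:
  fixes a' b' :: "nat list \<Rightarrow> ('n, 't) spoly fract"
  shows "(\<Sum>\<sigma>\<in>Iset (Suc n). emb (Delta (Suc n) a \<sigma> + \<beta> \<sigma> * Delta (Suc n) b \<sigma>) *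
            (Delta (Suc n) a' \<sigma> + Delta (Suc n) b' \<sigma> / emb (\<beta> \<sigma>)))
   = 2 * (\<Sum>\<tau>\<in>Iset n. emb (a \<tau>) * a' \<tau>) + 2 * (\<Sum>\<tau>\<in>Iset n. emb (b \<tau>) * b' \<tau>)"
proof -
  let ?y = "\<lambda>\<sigma>. Delta (Suc n) a' \<sigma> + Delta (Suc n) b' \<sigma> / emb (\<beta> \<sigma>)"
  have "(\<Sum>\<sigma>\<in>Iset (Suc n). emb (Delta (Suc n) a \<sigma> + \<beta> \<sigma> * Delta (Suc n) b \<sigma>) * ?y \<sigma>)
     = (\<Sum>\<tau>\<in>Iset n. emb (a \<tau>) * (?y \<tau> + ?y (\<tau> @ [Suc n])) + emb (b \<tau>) * (emb (\<beta> \<tau>) * (?y \<tau> - ?y (\<tau> @ [Suc n]))))"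
    by (rule pair_step)
  also have "\<dots> = (\<Sum>\<tau>\<in>Iset n. emb (a \<tau>) * (2 * a' \<tau>) + emb (b \<tau>) * (2 * b' \<tau>))"
    by (rule sum.cong[OF refl]) (simp only: yvals(3,4))
  also have "\<dots> = 2 * (\<Sum>\<tau>\<in>Iset n. emb (a \<tau>) * a' \<tau>) + 2 * (\<Sum>\<tau>\<in>Iset n. emb (b \<tau>) * b' \<tau>)"
    by (simp add: sum.distrib sum_distrib_left algebra_simps)
  finally show ?thesis .
qed

lemma ia_mem: "modX A \<Longrightarrow> a \<in> A \<Longrightarrow> (\<lambda>\<sigma>. Delta (Suc n) a \<sigma> + \<beta> \<sigma> * Delta (Suc n) (\<lambda>\<sigma>. 0) \<sigma>) \<in> stepX (Suc n) \<beta> A"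
  unfolding stepX_def modX_def by blast

lemma ib_mem: "modX A \<Longrightarrow> b \<in> A \<Longrightarrow> (\<lambda>\<sigma>. Delta (Suc n) (\<lambda>\<sigma>. 0) \<sigma> + \<beta> \<sigma> * Delta (Suc n) b \<sigma>) \<in> stepX (Suc n) \<beta> A"
  unfolding stepX_def modX_def by blast

lemma dual_step:
  assumes mX: "modX A" and vA: "vanS n A" and IH: "B = DualS R n A"
    and Qd: "\<And>\<tau> q. \<tau> \<in> Iset n \<Longrightarrow> q \<in> Qset R \<Longrightarrow> q / emb (\<beta> \<tau>) \<in> Qset R"
  shows "stepY (Suc n) \<beta> B = DualS R (Suc n) (stepX (Suc n) \<beta> A)"
proof
  have vB: "vanS n B" using IH by (auto simp: vanS_def DualS_def)
  show "stepY (Suc n) \<beta> B \<subseteq> DualS R (Suc n) (stepX (Suc n) \<beta> A)"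
  proof
    fix y assume yS: "y \<in> stepY (Suc n) \<beta> B"
    then obtain a' b' where yd: "y = (\<lambda>\<sigma>. Delta (Suc n) a' \<sigma> + Delta (Suc n) b' \<sigma> / emb (\<beta> \<sigma>))" "a' \<in> B" "b' \<in> B"
      unfolding stepY_def by blast
    have a'D: "vanish n a'" "\<And>\<sigma>. a' \<sigma> \<in> Qset R" "\<And>m. m \<in> A \<Longrightarrow> (\<Sum>\<sigma>\<in>Iset n. a' \<sigma> * emb (m \<sigma>)) \<in> Sset"
      using yd IH by (auto simp: DualS_def)
    have b'D: "vanish n b'" "\<And>\<sigma>. b' \<sigma> \<in> Qset R" "\<And>m. m \<in> A \<Longrightarrow> (\<Sum>\<sigma>\<in>Iset n. b' \<sigma> * emb (m \<sigma>)) \<in> Sset"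
      using yd IH by (auto simp: DualS_def)
    have van: "vanish (Suc n) y" using vanY_step[OF vB] yS by (auto simp: vanS_def)
    have Q: "y \<sigma> \<in> Qset R" for \<sigma>
    proof (cases "\<sigma> \<in> Iset (Suc n)")
      case True
      then consider "\<sigma> \<in> Iset n" | \<tau> where "\<tau> \<in> Iset n" "\<sigma> = \<tau> @ [Suc n]" using Iset_Suc_cases by blast
      then show ?thesis
      proof cases
        case 1
        then show ?thesis unfolding yd yvals(1)[OF 1] using a'D b'D Qd[OF 1] Q_add by blast
      next
        case 2
        then show ?thesis unfolding yd 2(2) yvals(2)[OF 2(1)] using a'D b'D Qd[OF 2(1)] Q_diff by blast
      qed
    next
      case False
      then show ?thesis using van Q_0 by (simp add: vanish_def)
    qed
    have S: "(\<Sum>\<sigma>\<in>Iset (Suc n). y \<sigma> * emb (m \<sigma>)) \<in> Sset" if m: "m \<in> stepX (Suc n) \<beta> A" for m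
    proof -
      obtain a b where md: "m = (\<lambda>\<sigma>. Delta (Suc n) a \<sigma> + \<beta> \<sigma> * Delta (Suc n) b \<sigma>)" "a \<in> A" "b \<in> A"
        using m unfolding stepX_def by blast
      have "(\<Sum>\<sigma>\<in>Iset (Suc n). y \<sigma> * emb (m \<sigma>)) = (\<Sum>\<sigma>\<in>Iset (Suc n). emb (m \<sigma>) * y \<sigma>)"
        by (simp add: mult.commute)
      also have "\<dots> = 2 * (\<Sum>\<tau>\<in>Iset n. emb (a \<tau>) * a' \<tau>) + 2 * (\<Sum>\<tau>\<in>Iset n. emb (b \<tau>) * b' \<tau>)"
        unfolding md yd by (rule pair_yy)
      also have "\<dots> = emb 2 * (\<Sum>\<tau>\<in>Iset n. a' \<tau> * emb (a \<tau>)) + emb 2 * (\<Sum>\<tau>\<in>Iset n. b' \<tau> * emb (b \<tau>))"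
        by (simp add: emb_2 mult.commute)
      finally show ?thesis using a'D(3)[OF md(2)] b'D(3)[OF md(3)] by (simp add: Sset_add Sset_mult)
    qed
    show "y \<in> DualS R (Suc n) (stepX (Suc n) \<beta> A)"
      unfolding DualS_def using van Q S by blast
  qed
next
  show "DualS R (Suc n) (stepX (Suc n) \<beta> A) \<subseteq> stepY (Suc n) \<beta> B"
  proof
    fix z assume z: "z \<in> DualS R (Suc n) (stepX (Suc n) \<beta> A)"
    then have zv: "vanish (Suc n) z" and zQ: "\<And>\<sigma>. z \<sigma> \<in> Qset R"
      and zS: "\<And>m. m \<in> stepX (Suc n) \<beta> A \<Longrightarrow> (\<Sum>\<sigma>\<in>Iset (Suc n). z \<sigma> * emb (m \<sigma>)) \<in> Sset"
      unfolding DualS_def by blast+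
    define zp where "zp = (\<lambda>\<tau>. if \<tau> \<in> Iset n then emb hh * (z \<tau> + z (\<tau> @ [Suc n])) else 0)"
    define zm where "zm = (\<lambda>\<tau>. if \<tau> \<in> Iset n then emb hh * (emb (\<beta> \<tau>) * (z \<tau> - z (\<tau> @ [Suc n]))) else 0)"
    have zpB: "zp \<in> B"
      unfolding IH DualS_def
    proof (intro CollectI conjI allI ballI)
      show "vanish n zp" by (simp add: vanish_def zp_def)
      show "zp \<sigma> \<in> Qset R" for \<sigma> using zQ by (simp add: zp_def Q_0 Q_mult Q_emb Q_add)
      fix a assume a: "a \<in> A"
      have "(\<Sum>\<tau>\<in>Iset n. zp \<tau> * emb (a \<tau>)) = emb hh * (\<Sum>\<tau>\<in>Iset n. emb (a \<tau>) * (z \<tau> + z (\<tau> @ [Suc n])) + emb 0 * (emb (\<beta> \<tau>) * (z \<tau> - z (\<tau> @ [Suc n]))))"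
        by (simp add: zp_def sum_distrib_left algebra_simps)
      also have "\<dots> = emb hh * (\<Sum>\<sigma>\<in>Iset (Suc n). z \<sigma> * emb (Delta (Suc n) a \<sigma> + \<beta> \<sigma> * Delta (Suc n) (\<lambda>\<sigma>. 0) \<sigma>))"
        by (subst pair_step') simp
      finally show "(\<Sum>\<tau>\<in>Iset n. zp \<tau> * emb (a \<tau>)) \<in> Sset"
        using zS[OF ia_mem[OF mX a]] by (simp add: Sset_mult)
    qed
    have zmB: "zm \<in> B"
      unfolding IH DualS_def
    proof (intro CollectI conjI allI ballI)
      show "vanish n zm" by (simp add: vanish_def zm_def)
      show "zm \<sigma> \<in> Qset R" for \<sigma> using zQ by (simp add: zm_def Q_0 Q_mult Q_emb Q_diff)
      fix b assume b: "b \<in> A"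
      have "(\<Sum>\<tau>\<in>Iset n. zm \<tau> * emb (b \<tau>)) = emb hh * (\<Sum>\<tau>\<in>Iset n. emb 0 * (z \<tau> + z (\<tau> @ [Suc n])) + emb (b \<tau>) * (emb (\<beta> \<tau>) * (z \<tau> - z (\<tau> @ [Suc n]))))"
        by (simp add: zm_def sum_distrib_left algebra_simps)
      also have "\<dots> = emb hh * (\<Sum>\<sigma>\<in>Iset (Suc n). z \<sigma> * emb (Delta (Suc n) (\<lambda>\<sigma>. 0) \<sigma> + \<beta> \<sigma> * Delta (Suc n) b \<sigma>))"
        by (subst pair_step') simp
      finally show "(\<Sum>\<tau>\<in>Iset n. zm \<tau> * emb (b \<tau>)) \<in> Sset"
        using zS[OF ib_mem[OF mX b]] by (simp add: Sset_mult)
    qed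
    define y where "y = (\<lambda>\<sigma>. Delta (Suc n) zp \<sigma> + Delta (Suc n) zm \<sigma> / emb (\<beta> \<sigma>))"
    have yS: "y \<in> stepY (Suc n) \<beta> B" unfolding y_def stepY_def using zpB zmB by blast
    have "z = y"
    proof
      fix \<sigma>
      show "z \<sigma> = y \<sigma>"
      proof (cases "\<sigma> \<in> Iset (Suc n)")
        case True
        then consider "\<sigma> \<in> Iset n" | \<tau> where "\<tau> \<in> Iset n" "\<sigma> = \<tau> @ [Suc n]" using Iset_Suc_cases by blast
        then show ?thesis
        proof cases
          case 1
          have "y \<sigma> = zp \<sigma> + zm \<sigma> / emb (\<beta> \<sigma>)" unfolding y_def by (rule yvals(1)[OF 1])
          also have "\<dots> = (2 * emb hh) * z \<sigma>"
            using 1 emb_b_nz[OF 1] by (simp add: zp_def zm_def field_simps)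
          finally show ?thesis by (simp add: half_emb)
        next
          case 2
          have "y \<sigma> = zp \<tau> - zm \<tau> / emb (\<beta> \<tau>)" unfolding y_def 2(2) by (rule yvals(2)[OF 2(1)])
          also have "\<dots> = (2 * emb hh) * z (\<tau> @ [Suc n])"
            using 2 emb_b_nz[OF 2(1)] by (simp add: zp_def zm_def field_simps)
          finally show ?thesis using 2 by (simp add: half_emb)
        qed
      next
        case False
        have "vanish n zp" "vanish n zm" by (simp_all add: vanish_def zp_def zm_def)
        then have "Delta (Suc n) zp \<sigma> = 0" "Delta (Suc n) zm \<sigma> = 0" using vanish_Delta False by blast+
        then have "y \<sigma> = 0" unfolding y_def by simp
        moreover have "z \<sigma> = 0" using zv False by (simp add: vanish_def)
        ultimately show ?thesis by simp
      qed
    qed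
    then show "z \<in> stepY (Suc n) \<beta> B" using yS by simp
  qed
qed

end


context step begin

lemma ia_ib_split:
  "(\<lambda>\<sigma>. Delta (Suc n) a \<sigma> + \<beta> \<sigma> * Delta (Suc n) b \<sigma>) =
   (\<lambda>\<sigma>. (\<lambda>\<sigma>. Delta (Suc n) a \<sigma> + \<beta> \<sigma> * Delta (Suc n) (\<lambda>\<sigma>. 0) \<sigma>) \<sigma> +
         (\<lambda>\<sigma>. Delta (Suc n) (\<lambda>\<sigma>. 0) \<sigma> + \<beta> \<sigma> * Delta (Suc n) b \<sigma>) \<sigma>)"
  by (simp add: Delta_const)

lemma lin_step:
  assumes mX: "modX A" and mY: "modY B"
    and IH: "\<And>\<phi>. lin A \<phi> \<Longrightarrow> \<exists>y\<in>B. rep n A \<phi> y"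
    and l: "lin (stepX (Suc n) \<beta> A) \<phi>"
  shows "\<exists>y\<in>stepY (Suc n) \<beta> B. rep (Suc n) (stepX (Suc n) \<beta> A) \<phi> y"
proof -
  let ?M = "stepX (Suc n) \<beta> A"
  define ia where "ia = (\<lambda>a. (\<lambda>\<sigma>. Delta (Suc n) a \<sigma> + \<beta> \<sigma> * Delta (Suc n) (\<lambda>\<sigma>. 0) \<sigma>))"
  define ib where "ib = (\<lambda>b. (\<lambda>\<sigma>. Delta (Suc n) (\<lambda>\<sigma>. 0) \<sigma> + \<beta> \<sigma> * Delta (Suc n) b \<sigma>))"
  have iaM: "a \<in> A \<Longrightarrow> ia a \<in> ?M" for a unfolding ia_def by (rule ia_mem[OF mX])
  have ibM: "b \<in> A \<Longrightarrow> ib b \<in> ?M" for b unfolding ib_def by (rule ib_mem[OF mX])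
  have l1: "\<phi> (\<lambda>\<sigma>. x \<sigma> + y \<sigma>) = \<phi> x + \<phi> y" if "x \<in> ?M" "y \<in> ?M" for x y
    using l that by (simp add: lin_def)
  have l2: "\<phi> (\<lambda>\<sigma>. c * x \<sigma>) = c * \<phi> x" if "x \<in> ?M" for c x
    using l that by (simp add: lin_def)
  have linA: "lin A (\<lambda>a. \<phi> (ia a))"
    unfolding lin_def
  proof (intro conjI ballI allI)
    fix x y assume "x \<in> A" "y \<in> A"
    moreover have "ia (\<lambda>\<sigma>. x \<sigma> + y \<sigma>) = (\<lambda>\<sigma>. ia x \<sigma> + ia y \<sigma>)"
      by (rule ext) (simp add: ia_def Delta_fun2 Delta_const)
    ultimately show "\<phi> (ia (\<lambda>\<sigma>. x \<sigma> + y \<sigma>)) = \<phi> (ia x) + \<phi> (ia y)" using l1 iaM by simp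
  next
    fix c x assume "x \<in> A"
    moreover have "ia (\<lambda>\<sigma>. c * x \<sigma>) = (\<lambda>\<sigma>. c * ia x \<sigma>)"
      by (rule ext) (simp add: ia_def Delta_fun1 Delta_const)
    ultimately show "\<phi> (ia (\<lambda>\<sigma>. c * x \<sigma>)) = c * \<phi> (ia x)" using l2 iaM by simp
  qed
  have linB: "lin A (\<lambda>b. \<phi> (ib b))"
    unfolding lin_def
  proof (intro conjI ballI allI)
    fix x y assume "x \<in> A" "y \<in> A"
    moreover have "ib (\<lambda>\<sigma>. x \<sigma> + y \<sigma>) = (\<lambda>\<sigma>. ib x \<sigma> + ib y \<sigma>)"
      by (rule ext) (simp add: ib_def Delta_fun2 Delta_const algebra_simps)
    ultimately show "\<phi> (ib (\<lambda>\<sigma>. x \<sigma> + y \<sigma>)) = \<phi> (ib x) + \<phi> (ib y)" using l1 ibM by simp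
  next
    fix c x assume "x \<in> A"
    moreover have "ib (\<lambda>\<sigma>. c * x \<sigma>) = (\<lambda>\<sigma>. c * ib x \<sigma>)"
      by (rule ext) (simp add: ib_def Delta_fun1 Delta_const algebra_simps)
    ultimately show "\<phi> (ib (\<lambda>\<sigma>. c * x \<sigma>)) = c * \<phi> (ib x)" using l2 ibM by simp
  qed
  obtain y1 where y1: "y1 \<in> B" "rep n A (\<lambda>a. \<phi> (ia a)) y1" using IH[OF linA] by blast
  obtain y2 where y2: "y2 \<in> B" "rep n A (\<lambda>b. \<phi> (ib b)) y2" using IH[OF linB] by blast
  define y where "y = (\<lambda>\<sigma>. Delta (Suc n) (\<lambda>\<sigma>. emb hh * y1 \<sigma>) \<sigma> + Delta (Suc n) (\<lambda>\<sigma>. emb hh * y2 \<sigma>) \<sigma> / emb (\<beta> \<sigma>))"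
  have yS: "y \<in> stepY (Suc n) \<beta> B"
    unfolding y_def stepY_def using mY y1(1) y2(1) unfolding modY_def by blast
  have hx: "2 * (e * (emb hh * u)) = e * u" for e u :: "('n, 't) spoly fract"
  proof -
    have "2 * (e * (emb hh * u)) = (2 * emb hh) * (e * u)" by (simp only: ac_simps)
    then show ?thesis by (simp add: half_emb)
  qed
  have "rep (Suc n) ?M \<phi> y"
    unfolding rep_def
  proof
    fix x assume "x \<in> ?M"
    then obtain a b where xd: "x = (\<lambda>\<sigma>. Delta (Suc n) a \<sigma> + \<beta> \<sigma> * Delta (Suc n) b \<sigma>)" "a \<in> A" "b \<in> A"
      unfolding stepX_def by blast
    have "x = (\<lambda>\<sigma>. ia a \<sigma> + ib b \<sigma>)" unfolding xd ia_def ib_def by (rule ia_ib_split)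
    then have "\<phi> x = \<phi> (ia a) + \<phi> (ib b)" using l1 iaM ibM xd by simp
    then have "emb (\<phi> x) = (\<Sum>\<tau>\<in>Iset n. emb (a \<tau>) * y1 \<tau>) + (\<Sum>\<tau>\<in>Iset n. emb (b \<tau>) * y2 \<tau>)"
      using y1(2) y2(2) xd by (simp add: rep_def emb_add)
    also have "\<dots> = 2 * (\<Sum>\<tau>\<in>Iset n. emb (a \<tau>) * (emb hh * y1 \<tau>)) + 2 * (\<Sum>\<tau>\<in>Iset n. emb (b \<tau>) * (emb hh * y2 \<tau>))"
      by (simp only: sum_distrib_left hx)
    also have "\<dots> = (\<Sum>\<sigma>\<in>Iset (Suc n). emb (x \<sigma>) * y \<sigma>)"
      unfolding xd y_def by (rule pair_yy[symmetric])
    finally show "emb (\<phi> x) = (\<Sum>\<sigma>\<in>Iset (Suc n). emb (x \<sigma>) * y \<sigma>)" .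
  qed
  then show ?thesis using yS by blast
qed

lemma uniq_step:
  assumes mX: "modX A"
    and IH: "\<And>w. (\<forall>x\<in>A. (\<Sum>\<sigma>\<in>Iset n. emb (x \<sigma>) * w \<sigma>) = 0) \<Longrightarrow> (\<forall>\<sigma>\<in>Iset n. w \<sigma> = 0)"
    and w: "\<forall>x\<in>stepX (Suc n) \<beta> A. (\<Sum>\<sigma>\<in>Iset (Suc n). emb (x \<sigma>) * w \<sigma>) = 0"
  shows "\<forall>\<sigma>\<in>Iset (Suc n). w \<sigma> = (0::('n, 't) spoly fract)"
proof -
  have "\<forall>x\<in>A. (\<Sum>\<tau>\<in>Iset n. emb (x \<tau>) * (w \<tau> + w (\<tau> @ [Suc n]))) = 0"
  proof
    fix a assume a: "a \<in> A"
    have "0 = (\<Sum>\<sigma>\<in>Iset (Suc n). emb (Delta (Suc n) a \<sigma> + \<beta> \<sigma> * Delta (Suc n) (\<lambda>\<sigma>. 0) \<sigma>) * w \<sigma>)"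
      using w ia_mem[OF mX a] by simp
    also have "\<dots> = (\<Sum>\<tau>\<in>Iset n. emb (a \<tau>) * (w \<tau> + w (\<tau> @ [Suc n])))"
      by (subst pair_step) (simp add: Delta_const)
    finally show "(\<Sum>\<tau>\<in>Iset n. emb (a \<tau>) * (w \<tau> + w (\<tau> @ [Suc n]))) = 0" by simp
  qed
  then have p: "\<forall>\<tau>\<in>Iset n. w \<tau> + w (\<tau> @ [Suc n]) = 0" using IH[of "\<lambda>\<tau>. w \<tau> + w (\<tau> @ [Suc n])"] by blast
  have "\<forall>x\<in>A. (\<Sum>\<tau>\<in>Iset n. emb (x \<tau>) * (emb (\<beta> \<tau>) * (w \<tau> - w (\<tau> @ [Suc n])))) = 0"
  proof
    fix b assume b: "b \<in> A"
    have "0 = (\<Sum>\<sigma>\<in>Iset (Suc n). emb (Delta (Suc n) (\<lambda>\<sigma>. 0) \<sigma> + \<beta> \<sigma> * Delta (Suc n) b \<sigma>) * w \<sigma>)"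
      using w ib_mem[OF mX b] by simp
    also have "\<dots> = (\<Sum>\<tau>\<in>Iset n. emb (b \<tau>) * (emb (\<beta> \<tau>) * (w \<tau> - w (\<tau> @ [Suc n]))))"
      by (subst pair_step) (simp add: Delta_const)
    finally show "(\<Sum>\<tau>\<in>Iset n. emb (b \<tau>) * (emb (\<beta> \<tau>) * (w \<tau> - w (\<tau> @ [Suc n])))) = 0" by simp
  qed
  then have m: "\<forall>\<tau>\<in>Iset n. emb (\<beta> \<tau>) * (w \<tau> - w (\<tau> @ [Suc n])) = 0"
    using IH[of "\<lambda>\<tau>. emb (\<beta> \<tau>) * (w \<tau> - w (\<tau> @ [Suc n]))"] by blast
  have both: "w \<tau> = 0 \<and> w (\<tau> @ [Suc n]) = 0" if t: "\<tau> \<in> Iset n" for \<tau>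
  proof -
    have "emb (\<beta> \<tau>) * (w \<tau> - w (\<tau> @ [Suc n])) = 0" using m t by blast
    then have e: "w \<tau> = w (\<tau> @ [Suc n])" using emb_b_nz[OF t] by simp
    have "w \<tau> = (2 * emb hh) * w \<tau>" by (simp add: half_emb)
    also have "\<dots> = emb hh * (w \<tau> + w (\<tau> @ [Suc n]))" using e by (simp add: algebra_simps)
    also have "\<dots> = 0" using p t by simp
    finally show ?thesis using e by simp
  qed
  show ?thesis
  proof
    fix \<sigma> assume "\<sigma> \<in> Iset (Suc n)"
    then consider "\<sigma> \<in> Iset n" | \<tau> where "\<tau> \<in> Iset n" "\<sigma> = \<tau> @ [Suc n]" using Iset_Suc_cases by blast
    then show "w \<sigma> = 0" using both by cases auto
  qed
qed

end


context step begin

definition T1 :: "(nat list \<Rightarrow> ('n, 't) spoly) \<Rightarrow> nat list \<Rightarrow> ('n, 't) spoly" where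
  "T1 x = (\<lambda>\<tau>. if \<tau> \<in> Iset n then x \<tau> + x (\<tau> @ [Suc n]) else 0)"

definition T2 :: "(nat list \<Rightarrow> ('n, 't) spoly) \<Rightarrow> nat list \<Rightarrow> ('n, 't) spoly" where
  "T2 x = (\<lambda>\<tau>. if \<tau> \<in> Iset n then (SOME c. \<beta> \<tau> * c = x \<tau> - x (\<tau> @ [Suc n])) else 0)"

lemma T_decomp:
  assumes vA: "vanS n A" and ab: "a \<in> A" "b \<in> A"
    and x: "x = (\<lambda>\<sigma>. Delta (Suc n) a \<sigma> + \<beta> \<sigma> * Delta (Suc n) b \<sigma>)"
  shows "T1 x = (\<lambda>\<tau>. a \<tau> + a \<tau>)" "T2 x = (\<lambda>\<tau>. b \<tau> + b \<tau>)"
    "\<And>\<tau>. \<tau> \<in> Iset n \<Longrightarrow> \<beta> \<tau> * T2 x \<tau> = x \<tau> - x (\<tau> @ [Suc n])"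
proof -
  have va: "vanish n a" "vanish n b" using vA ab by (auto simp: vanS_def)
  have xv: "x \<tau> = a \<tau> + \<beta> \<tau> * b \<tau>" "x (\<tau> @ [Suc n]) = a \<tau> - \<beta> \<tau> * b \<tau>" if "\<tau> \<in> Iset n" for \<tau>
    using that by (simp_all add: x Delta_Iset Delta_snoc b_snoc)
  show "T1 x = (\<lambda>\<tau>. a \<tau> + a \<tau>)"
  proof
    fix \<tau> show "T1 x \<tau> = a \<tau> + a \<tau>"
    proof (cases "\<tau> \<in> Iset n")
      case True
      have "T1 x \<tau> = x \<tau> + x (\<tau> @ [Suc n])" using True by (simp add: T1_def)
      also have "\<dots> = (a \<tau> + \<beta> \<tau> * b \<tau>) + (a \<tau> - \<beta> \<tau> * b \<tau>)" by (simp only: xv[OF True])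
      finally show ?thesis by simp
    next
      case False
      then have "a \<tau> = 0" using va(1) by (simp add: vanish_def)
      then show ?thesis using False by (simp add: T1_def)
    qed
  qed
  have t2: "T2 x \<tau> = b \<tau> + b \<tau>" if t: "\<tau> \<in> Iset n" for \<tau>
  proof -
    have ex: "\<beta> \<tau> * (b \<tau> + b \<tau>) = x \<tau> - x (\<tau> @ [Suc n])" unfolding xv[OF t] by (simp add: algebra_simps)
    then have "\<beta> \<tau> * (SOME c. \<beta> \<tau> * c = x \<tau> - x (\<tau> @ [Suc n])) = x \<tau> - x (\<tau> @ [Suc n])"
      by (rule someI)
    then have "\<beta> \<tau> * T2 x \<tau> = \<beta> \<tau> * (b \<tau> + b \<tau>)" using t ex by (simp add: T2_def)
    then show ?thesis using b_nz[OF t] by simp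
  qed
  show "T2 x = (\<lambda>\<tau>. b \<tau> + b \<tau>)"
  proof
    fix \<tau> show "T2 x \<tau> = b \<tau> + b \<tau>"
    proof (cases "\<tau> \<in> Iset n")
      case True then show ?thesis by (rule t2)
    next
      case False
      then have "b \<tau> = 0" using va(2) by (simp add: vanish_def)
      then show ?thesis using False by (simp add: T2_def)
    qed
  qed
  show "\<beta> \<tau> * T2 x \<tau> = x \<tau> - x (\<tau> @ [Suc n])" if "\<tau> \<in> Iset n" for \<tau>
    unfolding t2[OF that] xv[OF that] by (simp add: algebra_simps)
qed

lemma T_props:
  assumes mX: "modX A" and vA: "vanS n A" and x: "x \<in> stepX (Suc n) \<beta> A"
  shows "T1 x \<in> A" "T2 x \<in> A" "\<And>\<tau>. \<tau> \<in> Iset n \<Longrightarrow> \<beta> \<tau> * T2 x \<tau> = x \<tau> - x (\<tau> @ [Suc n])"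
proof -
  obtain a b where xd: "x = (\<lambda>\<sigma>. Delta (Suc n) a \<sigma> + \<beta> \<sigma> * Delta (Suc n) b \<sigma>)" "a \<in> A" "b \<in> A"
    using x unfolding stepX_def by blast
  note d = T_decomp[OF vA xd(2,3) xd(1)]
  show "T1 x \<in> A" "T2 x \<in> A" using mX xd unfolding d(1,2) modX_def by blast+
  show "\<And>\<tau>. \<tau> \<in> Iset n \<Longrightarrow> \<beta> \<tau> * T2 x \<tau> = x \<tau> - x (\<tau> @ [Suc n])" by (rule d(3))
qed

lemma T1_add: "T1 (\<lambda>\<sigma>. x \<sigma> + y \<sigma>) = (\<lambda>\<sigma>. T1 x \<sigma> + T1 y \<sigma>)"
  by (rule ext) (simp add: T1_def)

lemma T1_mult: "T1 (\<lambda>\<sigma>. c * x \<sigma>) = (\<lambda>\<sigma>. c * T1 x \<sigma>)"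
  by (rule ext) (simp add: T1_def algebra_simps)

lemma T2_add:
  assumes mX: "modX A" and vA: "vanS n A" and x: "x \<in> stepX (Suc n) \<beta> A" and y: "y \<in> stepX (Suc n) \<beta> A"
  shows "T2 (\<lambda>\<sigma>. x \<sigma> + y \<sigma>) = (\<lambda>\<sigma>. T2 x \<sigma> + T2 y \<sigma>)"
proof
  fix \<tau>
  have xy: "(\<lambda>\<sigma>. x \<sigma> + y \<sigma>) \<in> stepX (Suc n) \<beta> A" using modX_step[OF mX] x y by (simp add: modX_def)
  show "T2 (\<lambda>\<sigma>. x \<sigma> + y \<sigma>) \<tau> = T2 x \<tau> + T2 y \<tau>"
  proof (cases "\<tau> \<in> Iset n")
    case True
    have "\<beta> \<tau> * T2 (\<lambda>\<sigma>. x \<sigma> + y \<sigma>) \<tau> = (x \<tau> + y \<tau>) - (x (\<tau> @ [Suc n]) + y (\<tau> @ [Suc n]))"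
      using T_props(3)[OF mX vA xy True] by (simp only:)
    also have "\<dots> = (x \<tau> - x (\<tau> @ [Suc n])) + (y \<tau> - y (\<tau> @ [Suc n]))" by (simp add: algebra_simps)
    also have "\<dots> = \<beta> \<tau> * (T2 x \<tau> + T2 y \<tau>)"
      by (simp only: T_props(3)[OF mX vA x True, symmetric] T_props(3)[OF mX vA y True, symmetric] distrib_left)
    finally have "\<beta> \<tau> * T2 (\<lambda>\<sigma>. x \<sigma> + y \<sigma>) \<tau> = \<beta> \<tau> * (T2 x \<tau> + T2 y \<tau>)" .
    then show ?thesis using b_nz[OF True] by simp
  next
    case False then show ?thesis by (simp add: T2_def)
  qed
qed

lemma T2_mult:
  assumes mX: "modX A" and vA: "vanS n A" and x: "x \<in> stepX (Suc n) \<beta> A"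
  shows "T2 (\<lambda>\<sigma>. c * x \<sigma>) = (\<lambda>\<sigma>. c * T2 x \<sigma>)"
proof
  fix \<tau>
  have cx: "(\<lambda>\<sigma>. c * x \<sigma>) \<in> stepX (Suc n) \<beta> A" using modX_step[OF mX] x by (simp add: modX_def)
  show "T2 (\<lambda>\<sigma>. c * x \<sigma>) \<tau> = c * T2 x \<tau>"
  proof (cases "\<tau> \<in> Iset n")
    case True
    have "\<beta> \<tau> * T2 (\<lambda>\<sigma>. c * x \<sigma>) \<tau> = c * x \<tau> - c * x (\<tau> @ [Suc n])"
      using T_props(3)[OF mX vA cx True] by (simp only:)
    also have "\<dots> = c * (x \<tau> - x (\<tau> @ [Suc n]))" by (simp add: algebra_simps)
    also have "\<dots> = \<beta> \<tau> * (c * T2 x \<tau>)"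
      by (simp only: T_props(3)[OF mX vA x True, symmetric] mult.left_commute)
    finally have "\<beta> \<tau> * T2 (\<lambda>\<sigma>. c * x \<sigma>) \<tau> = \<beta> \<tau> * (c * T2 x \<tau>)" .
    then show ?thesis using b_nz[OF True] by simp
  next
    case False then show ?thesis by (simp add: T2_def)
  qed
qed

lemma T_homog:
  assumes mX: "modX A" and vA: "vanS n A" and x: "x \<in> stepX (Suc n) \<beta> A"
    and h: "\<forall>\<sigma>. homog k (x \<sigma>)"
  shows "\<forall>\<sigma>. homog k (T1 x \<sigma>)" "\<forall>\<sigma>. homog (k - 2) (T2 x \<sigma>)"
proof -
  show "\<forall>\<sigma>. homog k (T1 x \<sigma>)" using h by (simp add: T1_def homog_add)
  show "\<forall>\<sigma>. homog (k - 2) (T2 x \<sigma>)"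
  proof
    fix \<tau> show "homog (k - 2) (T2 x \<tau>)"
    proof (cases "\<tau> \<in> Iset n")
      case True
      have "homog k (\<beta> \<tau> * T2 x \<tau>)" using T_props(3)[OF mX vA x True] h by (simp add: homog_diff)
      then show ?thesis by (rule homog_cancel[OF b_hom[OF True] b_nz[OF True]])
    next
      case False then show ?thesis by (simp add: T2_def)
    qed
  qed
qed

end


lemma sum_if_sub:
  assumes "finite F" "Fa \<subseteq> F"
  shows "(\<Sum>k\<in>F. if k \<in> Fa then f k else 0) = (\<Sum>k\<in>Fa. f k)"
proof -
  have "(\<Sum>k\<in>F. if k \<in> Fa then f k else 0) = (\<Sum>k\<in>F \<inter> Fa. f k)"
    by (rule sum.inter_restrict[symmetric]) (rule assms(1))
  also have "F \<inter> Fa = Fa" using assms(2) by blast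
  finally show ?thesis .
qed

lemma sum_if_shift:
  fixes Fb F :: "int set"
  assumes "finite F" "(\<lambda>k. k - 2) ` Fb \<subseteq> F"
  shows "(\<Sum>k\<in>F. if k + 2 \<in> Fb then g (k + 2) else 0) = (\<Sum>k\<in>Fb. g k)"
proof -
  have "(\<Sum>k\<in>F. if k + 2 \<in> Fb then g (k + 2) else 0) = (\<Sum>k\<in>F \<inter> {k. k + 2 \<in> Fb}. g (k + 2))"
    using sum.inter_restrict[OF assms(1), of "\<lambda>k. g (k + 2)" "{k. k + 2 \<in> Fb}"] by simp
  also have "F \<inter> {k. k + 2 \<in> Fb} = (\<lambda>k. k - 2) ` Fb"
  proof
    show "F \<inter> {k. k + 2 \<in> Fb} \<subseteq> (\<lambda>k. k - 2) ` Fb"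
    proof
      fix k assume "k \<in> F \<inter> {k. k + 2 \<in> Fb}"
      then have "k + 2 \<in> Fb" by simp
      moreover have "k = (k + 2) - 2" by simp
      ultimately show "k \<in> (\<lambda>k. k - 2) ` Fb" by blast
    qed
    show "(\<lambda>k. k - 2) ` Fb \<subseteq> F \<inter> {k. k + 2 \<in> Fb}" using assms(2) by auto
  qed
  also have "(\<Sum>k\<in>(\<lambda>k. k - 2) ` Fb. g (k + 2)) = (\<Sum>k\<in>Fb. g k)"
    by (subst sum.reindex) (auto simp: inj_on_def)
  finally show ?thesis .
qed

context step begin

lemma gdual_step:
  assumes mX: "modX A" and vA: "vanS n A"
    and IH: "\<And>y. y \<in> B \<Longrightarrow> \<exists>\<phi>\<in>gdual A. rep n A \<phi> y"
    and yS: "y \<in> stepY (Suc n) \<beta> B"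
  shows "\<exists>\<phi>\<in>gdual (stepX (Suc n) \<beta> A). rep (Suc n) (stepX (Suc n) \<beta> A) \<phi> y"
proof -
  let ?M = "stepX (Suc n) \<beta> A"
  obtain a' b' where yd: "y = (\<lambda>\<sigma>. Delta (Suc n) a' \<sigma> + Delta (Suc n) b' \<sigma> / emb (\<beta> \<sigma>))" "a' \<in> B" "b' \<in> B"
    using yS unfolding stepY_def by blast
  obtain \<phi>a where pa: "\<phi>a \<in> gdual A" "rep n A \<phi>a a'" using IH[OF yd(2)] by blast
  obtain \<phi>b where pb: "\<phi>b \<in> gdual A" "rep n A \<phi>b b'" using IH[OF yd(3)] by blast
  obtain Fa \<psi>a where Fa: "finite Fa" "\<And>k. k \<in> Fa \<Longrightarrow> ghom A k (\<psi>a k)" "\<phi>a = (\<lambda>x. \<Sum>k\<in>Fa. \<psi>a k x)"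
    using pa(1) unfolding gdual_def by blast
  obtain Fb \<psi>b where Fb: "finite Fb" "\<And>k. k \<in> Fb \<Longrightarrow> ghom A k (\<psi>b k)" "\<phi>b = (\<lambda>x. \<Sum>k\<in>Fb. \<psi>b k x)"
    using pb(1) unfolding gdual_def by blast
  define \<psi> where "\<psi> = (\<lambda>k x. if x \<in> ?M then (if k \<in> Fa then \<psi>a k (T1 x) else 0)
                                       + (if k + 2 \<in> Fb then \<psi>b (k + 2) (T2 x) else 0) else 0)"
  define F where "F = Fa \<union> (\<lambda>k. k - 2) ` Fb"
  have finF: "finite F" using Fa(1) Fb(1) by (simp add: F_def)
  have gh: "ghom ?M k (\<psi> k)" for k
    unfolding ghom_def
  proof (intro conjI ballI allI impI)
    fix x y assume x: "x \<in> ?M" and y: "y \<in> ?M"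
    have xy: "(\<lambda>\<sigma>. x \<sigma> + y \<sigma>) \<in> ?M" using modX_step[OF mX] x y by (simp add: modX_def)
    have A1: "T1 x \<in> A" "T1 y \<in> A" "T2 x \<in> A" "T2 y \<in> A" using T_props[OF mX vA] x y by blast+
    have ea: "\<psi>a k (T1 (\<lambda>\<sigma>. x \<sigma> + y \<sigma>)) = \<psi>a k (T1 x) + \<psi>a k (T1 y)" if "k \<in> Fa"
      unfolding T1_add using Fa(2)[OF that] A1 by (simp add: ghom_def)
    have eb: "\<psi>b (k + 2) (T2 (\<lambda>\<sigma>. x \<sigma> + y \<sigma>)) = \<psi>b (k + 2) (T2 x) + \<psi>b (k + 2) (T2 y)" if "k + 2 \<in> Fb"
      unfolding T2_add[OF mX vA x y] using Fb(2)[OF that] A1 by (simp add: ghom_def)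
    show "\<psi> k (\<lambda>\<sigma>. x \<sigma> + y \<sigma>) = \<psi> k x + \<psi> k y"
      using x y xy ea eb by (simp add: \<psi>_def algebra_simps)
  next
    fix c x assume x: "x \<in> ?M"
    have cx: "(\<lambda>\<sigma>. c * x \<sigma>) \<in> ?M" using modX_step[OF mX] x by (simp add: modX_def)
    have A1: "T1 x \<in> A" "T2 x \<in> A" using T_props[OF mX vA] x by blast+
    have ea: "\<psi>a k (T1 (\<lambda>\<sigma>. c * x \<sigma>)) = c * \<psi>a k (T1 x)" if "k \<in> Fa"
      unfolding T1_mult using Fa(2)[OF that] A1 by (simp add: ghom_def)
    have eb: "\<psi>b (k + 2) (T2 (\<lambda>\<sigma>. c * x \<sigma>)) = c * \<psi>b (k + 2) (T2 x)" if "k + 2 \<in> Fb"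
      unfolding T2_mult[OF mX vA x] using Fb(2)[OF that] A1 by (simp add: ghom_def)
    show "\<psi> k (\<lambda>\<sigma>. c * x \<sigma>) = c * \<psi> k x"
      using x cx ea eb by (simp add: \<psi>_def algebra_simps)
  next
    fix j x assume x: "x \<in> ?M" and h: "\<forall>\<sigma>. homog j (x \<sigma>)"
    have A1: "T1 x \<in> A" "T2 x \<in> A" using T_props[OF mX vA] x by blast+
    note th = T_homog[OF mX vA x h]
    have ha: "homog (k + j) (if k \<in> Fa then \<psi>a k (T1 x) else 0)"
    proof (cases "k \<in> Fa")
      case True
      then have "homog (k + j) (\<psi>a k (T1 x))" using Fa(2)[OF True] A1 th(1) unfolding ghom_def by blast
      then show ?thesis using True by simp
    qed simp
    have hb: "homog (k + j) (if k + 2 \<in> Fb then \<psi>b (k + 2) (T2 x) else 0)"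
    proof (cases "k + 2 \<in> Fb")
      case True
      then have "homog ((k + 2) + (j - 2)) (\<psi>b (k + 2) (T2 x))" using Fb(2)[OF True] A1 th(2) unfolding ghom_def by blast
      then show ?thesis using True by simp
    qed simp
    show "homog (k + j) (\<psi> k x)" using x ha hb by (simp add: \<psi>_def homog_add)
  next
    fix x assume "x \<notin> ?M"
    then show "\<psi> k x = 0" by (simp add: \<psi>_def)
  qed
  have sumF: "(\<Sum>k\<in>F. \<psi> k x) = \<phi>a (T1 x) + \<phi>b (T2 x)" if x: "x \<in> ?M" for x
  proof -
    have "(\<Sum>k\<in>F. \<psi> k x) = (\<Sum>k\<in>F. if k \<in> Fa then \<psi>a k (T1 x) else 0) + (\<Sum>k\<in>F. if k + 2 \<in> Fb then \<psi>b (k + 2) (T2 x) else 0)"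
      using x by (simp add: \<psi>_def sum.distrib)
    also have "(\<Sum>k\<in>F. if k \<in> Fa then \<psi>a k (T1 x) else 0) = (\<Sum>k\<in>Fa. \<psi>a k (T1 x))"
      by (rule sum_if_sub[OF finF]) (simp add: F_def)
    also have "(\<Sum>k\<in>F. if k + 2 \<in> Fb then \<psi>b (k + 2) (T2 x) else 0) = (\<Sum>k\<in>Fb. \<psi>b k (T2 x))"
      by (rule sum_if_shift[OF finF, where g = "\<lambda>k. \<psi>b k (T2 x)"]) (simp add: F_def)
    finally show ?thesis by (simp add: Fa(3) Fb(3))
  qed
  define \<phi> where "\<phi> = (\<lambda>x. \<Sum>k\<in>F. \<psi> k x)"
  have "\<phi> \<in> gdual ?M" unfolding gdual_def \<phi>_def using finF gh by blast
  moreover have "rep (Suc n) ?M \<phi> y"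
    unfolding rep_def
  proof
    fix x assume x: "x \<in> ?M"
    then obtain a b where xd: "x = (\<lambda>\<sigma>. Delta (Suc n) a \<sigma> + \<beta> \<sigma> * Delta (Suc n) b \<sigma>)" "a \<in> A" "b \<in> A"
      unfolding stepX_def by blast
    note d = T_decomp[OF vA xd(2,3) xd(1)]
    have A1: "T1 x \<in> A" "T2 x \<in> A" using T_props[OF mX vA] x by blast+
    have "emb (\<phi> x) = emb (\<phi>a (T1 x)) + emb (\<phi>b (T2 x))" using sumF[OF x] by (simp add: \<phi>_def emb_add)
    also have "\<dots> = (\<Sum>\<tau>\<in>Iset n. emb (T1 x \<tau>) * a' \<tau>) + (\<Sum>\<tau>\<in>Iset n. emb (T2 x \<tau>) * b' \<tau>)"
      using pa(2) pb(2) A1 by (simp add: rep_def)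
    also have "\<dots> = 2 * (\<Sum>\<tau>\<in>Iset n. emb (a \<tau>) * a' \<tau>) + 2 * (\<Sum>\<tau>\<in>Iset n. emb (b \<tau>) * b' \<tau>)"
      unfolding d(1,2) by (simp only: emb_add) (simp add: sum_distrib_left algebra_simps mult_2 sum.distrib)
    also have "\<dots> = (\<Sum>\<sigma>\<in>Iset (Suc n). emb (x \<sigma>) * y \<sigma>)"
      unfolding xd yd by (rule pair_yy[symmetric])
    finally show "emb (\<phi> x) = (\<Sum>\<sigma>\<in>Iset (Suc n). emb (x \<sigma>) * y \<sigma>)" .
  qed
  ultimately show ?thesis by blast
qed

end


lemma gdual_lin: "\<phi> \<in> gdual M \<Longrightarrow> lin M \<phi>"
proof -
  assume "\<phi> \<in> gdual M"
  then obtain F \<psi> where F: "finite F" "\<And>k. k \<in> F \<Longrightarrow> ghom M k (\<psi> k)" "\<phi> = (\<lambda>x. \<Sum>k\<in>F. \<psi> k x)"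
    unfolding gdual_def by blast
  show "lin M \<phi>" unfolding lin_def F(3)
  proof (intro conjI ballI allI)
    fix x y assume "x \<in> M" "y \<in> M"
    then have "\<psi> k (\<lambda>\<sigma>. x \<sigma> + y \<sigma>) = \<psi> k x + \<psi> k y" if "k \<in> F" for k
      using F(2)[OF that] by (simp add: ghom_def)
    then show "(\<Sum>k\<in>F. \<psi> k (\<lambda>\<sigma>. x \<sigma> + y \<sigma>)) = (\<Sum>k\<in>F. \<psi> k x) + (\<Sum>k\<in>F. \<psi> k y)"
      by (simp add: sum.distrib)
  next
    fix a x assume "x \<in> M"
    then have "\<psi> k (\<lambda>\<sigma>. a * x \<sigma>) = a * \<psi> k x" if "k \<in> F" for k
      using F(2)[OF that] by (simp add: ghom_def)
    then show "(\<Sum>k\<in>F. \<psi> k (\<lambda>\<sigma>. a * x \<sigma>)) = a * (\<Sum>k\<in>F. \<psi> k x)"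
      by (simp add: sum_distrib_left)
  qed
qed

context rsetup begin

lemma XR_step: "XR cor (t # rs) = stepX (Suc (length rs)) (bet t rs) (XR cor rs)"
  by (simp add: stepX_def bet_def)

lemma YR_step: "YR cor (t # rs) = stepY (Suc (length rs)) (bet t rs) (YR cor rs)"
  by (simp add: stepY_def bet_def)

abbreviation "X0 \<equiv> (XR cor [] :: (nat list \<Rightarrow> ('n, 't::idom) spoly) set)"

lemma base_props:
  fixes X :: "(nat list \<Rightarrow> ('n, 't::idom) spoly) set" and Y :: "(nat list \<Rightarrow> ('n, 't) spoly fract) set"
  assumes X: "X = XR cor []" and Y: "Y = YR cor []"
  shows "modX X \<and> vanS 0 X \<and> modY Y \<and> Y = DualS R 0 X \<and>
      (\<forall>y\<in>Y. \<exists>\<phi>\<in>gdual X. rep 0 X \<phi> y) \<and>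
      (\<forall>\<phi>. lin X \<phi> \<longrightarrow> (\<exists>y\<in>Y. rep 0 X \<phi> y)) \<and>
      (\<forall>w. (\<forall>x\<in>X. (\<Sum>\<sigma>\<in>Iset 0. emb (x \<sigma>) * w \<sigma>) = 0) \<longrightarrow> (\<forall>\<sigma>\<in>Iset 0. w \<sigma> = 0))"
proof -
  have Xd: "X = {z. \<forall>\<sigma>. \<sigma> \<noteq> [] \<longrightarrow> z \<sigma> = 0}" using X by simp
  have Yd: "Y = {z. z [] \<in> Sset \<and> (\<forall>\<sigma>. \<sigma> \<noteq> [] \<longrightarrow> z \<sigma> = 0)}" using Y by simp
  define e :: "nat list \<Rightarrow> ('n, 't) spoly" where "e = (\<lambda>\<sigma>. if \<sigma> = [] then 1 else 0)"
  have eX: "e \<in> X" unfolding Xd e_def by simp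
  have xe: "x = (\<lambda>\<sigma>. x [] * e \<sigma>)" if "x \<in> X" for x
    using that unfolding Xd e_def by (auto simp: fun_eq_iff)
  have m1: "modX X" unfolding modX_def Xd by simp
  have v1: "vanS 0 X" unfolding vanS_def vanish_def Xd Iset_0 by simp
  have S0: "0 \<in> Sset" using Sset_emb[of 0] by simp
  have m2: "modY Y" unfolding modY_def Yd by (simp add: Sset_add Sset_mult S0)
  have d: "Y = DualS R 0 X"
  proof
    show "Y \<subseteq> DualS R 0 X"
    proof
      fix y assume y: "y \<in> Y"
      then obtain c where c: "y [] = emb c" unfolding Yd Sset_def by blast
      have "vanish 0 y" using y unfolding Yd vanish_def Iset_0 by simp
      moreover have "y \<sigma> \<in> Qset R" for \<sigma>
        using y c Q_emb Q_0 unfolding Yd by (cases "\<sigma> = []") auto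
      moreover have "(\<Sum>\<sigma>\<in>Iset 0. y \<sigma> * emb (m \<sigma>)) \<in> Sset" for m
        by (simp add: Iset_0 c Sset_mult)
      ultimately show "y \<in> DualS R 0 X" unfolding DualS_def by blast
    qed
    show "DualS R 0 X \<subseteq> Y"
    proof
      fix z assume z: "z \<in> DualS R 0 X"
      then have "(\<Sum>\<sigma>\<in>Iset 0. z \<sigma> * emb (e \<sigma>)) \<in> Sset" using eX unfolding DualS_def by blast
      then have "z [] \<in> Sset" by (simp add: Iset_0 e_def)
      moreover have "\<forall>\<sigma>. \<sigma> \<noteq> [] \<longrightarrow> z \<sigma> = 0" using z unfolding DualS_def vanish_def Iset_0 by simp
      ultimately show "z \<in> Y" unfolding Yd by simp
    qed
  qed
  have g: "\<exists>\<phi>\<in>gdual X. rep 0 X \<phi> y" if y: "y \<in> Y" for y :: "nat list \<Rightarrow> ('n, 't) spoly fract"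
  proof -
    obtain c where c: "y [] = emb c" using y unfolding Yd Sset_def by blast
    define \<psi> where "\<psi> = (\<lambda>k (x :: nat list \<Rightarrow> ('n, 't) spoly). if x \<in> X then hpn k c * x [] else 0)"
    define F where "F = (\<lambda>m. 2 * int (deg m)) ` Poly_Mapping.keys c"
    have gh: "ghom X k (\<psi> k)" for k
      unfolding ghom_def
    proof (intro conjI ballI allI impI)
      fix x y assume "x \<in> X" "y \<in> X"
      moreover then have "(\<lambda>\<sigma>. x \<sigma> + y \<sigma>) \<in> X" unfolding Xd by simp
      ultimately show "\<psi> k (\<lambda>\<sigma>. x \<sigma> + y \<sigma>) = \<psi> k x + \<psi> k y" by (simp only: \<psi>_def if_True distrib_left)
    next
      fix a x assume "x \<in> X"
      moreover then have "(\<lambda>\<sigma>. a * x \<sigma>) \<in> X" unfolding Xd by simp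
      ultimately show "\<psi> k (\<lambda>\<sigma>. a * x \<sigma>) = a * \<psi> k x" by (simp only: \<psi>_def if_True mult.left_commute)
    next
      fix j x assume "x \<in> X" "\<forall>\<sigma>. homog j (x \<sigma>)"
      then show "homog (k + j) (\<psi> k x)" by (simp add: \<psi>_def homog_mult homog_hpn)
    next
      fix x assume "x \<notin> X" then show "\<psi> k x = 0" by (simp add: \<psi>_def)
    qed
    define \<phi> where "\<phi> = (\<lambda>x. \<Sum>k\<in>F. \<psi> k x)"
    have finF: "finite F" unfolding F_def by simp
    have "\<phi> \<in> gdual X" unfolding gdual_def \<phi>_def using finF gh by blast
    moreover have "rep 0 X \<phi> y"
      unfolding rep_def
    proof
      fix x assume x: "x \<in> X"
      have "\<phi> x = (\<Sum>k\<in>F. hpn k c) * x []" using x by (simp add: \<phi>_def \<psi>_def sum_distrib_right)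
      also have "(\<Sum>k\<in>F. hpn k c) = c" unfolding F_def by (rule hpn_decomp[symmetric])
      finally show "emb (\<phi> x) = (\<Sum>\<sigma>\<in>Iset 0. emb (x \<sigma>) * y \<sigma>)"
        by (simp add: Iset_0 c emb_mult mult.commute)
    qed
    ultimately show ?thesis by blast
  qed
  have l: "\<exists>y\<in>Y. rep 0 X \<phi> y" if "lin X \<phi>" for \<phi> :: "(nat list \<Rightarrow> ('n, 't) spoly) \<Rightarrow> ('n, 't) spoly"
  proof -
    have ph: "\<phi> x = x [] * \<phi> e" if "x \<in> X" for x
    proof -
      have "\<phi> x = \<phi> (\<lambda>\<sigma>. x [] * e \<sigma>)" using xe[OF that] by simp
      also have "\<dots> = x [] * \<phi> e" using \<open>lin X \<phi>\<close> eX by (simp add: lin_def)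
      finally show ?thesis .
    qed
    define y where "y = (\<lambda>\<sigma>::nat list. if \<sigma> = [] then emb (\<phi> e) else (0 :: ('n, 't) spoly fract))"
    have "y \<in> Y" unfolding Yd y_def by simp
    moreover have "rep 0 X \<phi> y" unfolding rep_def
      by (simp add: Iset_0 y_def ph emb_mult)
    ultimately show ?thesis by blast
  qed
  have u: "\<forall>\<sigma>\<in>Iset 0. w \<sigma> = 0" if "\<forall>x\<in>X. (\<Sum>\<sigma>\<in>Iset 0. emb (x \<sigma>) * w \<sigma>) = 0" for w :: "nat list \<Rightarrow> ('n, 't) spoly fract"
  proof -
    have "(\<Sum>\<sigma>\<in>Iset 0. emb (e \<sigma>) * w \<sigma>) = 0" using that eX by blast
    then show ?thesis by (simp add: Iset_0 e_def)
  qed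
  show ?thesis using m1 v1 m2 d g l u by blast
qed

end


context rsetup begin

lemma main_ind:
  fixes hh :: "('n, 't::idom) spoly"
  assumes tens: "\<forall>x\<in>affine_roots R. (\<exists>j. (tensT x j :: 't) \<noteq> 0)"
    and half: "2 * hh = 1"
  shows "set rs \<subseteq> Shat P g \<Longrightarrow>
    modX (XR cor rs :: (nat list \<Rightarrow> ('n, 't) spoly) set) \<and> vanS (length rs) (XR cor rs :: (nat list \<Rightarrow> ('n, 't) spoly) set) \<and>
    modY (YR cor rs :: (nat list \<Rightarrow> ('n, 't) spoly fract) set) \<and>
    (YR cor rs :: (nat list \<Rightarrow> ('n, 't) spoly fract) set) = DualS R (length rs) (XR cor rs) \<and>
    (\<forall>y\<in>(YR cor rs :: (nat list \<Rightarrow> ('n, 't) spoly fract) set). \<exists>\<phi>\<in>gdual (XR cor rs). rep (length rs) (XR cor rs) \<phi> y) \<and>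
    (\<forall>\<phi>. lin (XR cor rs :: (nat list \<Rightarrow> ('n, 't) spoly) set) \<phi> \<longrightarrow> (\<exists>y\<in>YR cor rs. rep (length rs) (XR cor rs) \<phi> y)) \<and>
    (\<forall>w. (\<forall>x\<in>(XR cor rs :: (nat list \<Rightarrow> ('n, 't) spoly) set). (\<Sum>\<sigma>\<in>Iset (length rs). emb (x \<sigma>) * w \<sigma>) = 0)
          \<longrightarrow> (\<forall>\<sigma>\<in>Iset (length rs). w \<sigma> = 0))"
proof (induction rs)
  case Nil
  show ?case using base_props[OF refl refl] by simp
next
  case (Cons t rs)
  then have t: "t \<in> Shat P g" and rsS: "set rs \<subseteq> Shat P g" by auto
  note IH = Cons.IH[OF rsS]
  let ?n = "length rs"
  let ?b = "bet t rs :: nat list \<Rightarrow> ('n, 't) spoly"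
  let ?A = "XR cor rs :: (nat list \<Rightarrow> ('n, 't) spoly) set"
  let ?B = "YR cor rs :: (nat list \<Rightarrow> ('n, 't) spoly fract) set"
  have root: "\<tau> \<in> Iset ?n \<Longrightarrow> ev cor (rev (t # rs)) \<tau> (sroot t) \<in> affine_roots R" for \<tau>
    by (rule bet_root[OF t rsS])
  interpret st: step ?n ?b hh
  proof
    show "?b (\<tau> @ [Suc ?n]) = - ?b \<tau>" for \<tau> by (rule bet_snoc[OF t])
    show "?b \<tau> \<noteq> 0" if tau: "\<tau> \<in> Iset ?n" for \<tau>
    proof -
      obtain j where "(tensT (ev cor (rev (t # rs)) \<tau> (sroot t)) j :: 't) \<noteq> 0" using tens root[OF tau] by blast
      then show ?thesis unfolding bet_def by (rule linX_nonzero)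
    qed
    show "homog 2 (?b \<tau>)" for \<tau> unfolding bet_def by (rule homog_linX)
    show "2 * hh = 1" by (rule half)
  qed
  have Qd: "q / emb (?b \<tau>) \<in> Qset R" if "\<tau> \<in> Iset ?n" "q \<in> Qset R" for \<tau> q
    unfolding bet_def using Q_div[OF that(2) root[OF that(1)]] .
  have mA: "modX ?A" and vA: "vanS ?n ?A" and mB: "modY ?B" and dB: "?B = DualS R ?n ?A"
    and gB: "\<forall>y\<in>?B. \<exists>\<phi>\<in>gdual ?A. rep ?n ?A \<phi> y"
    and lB: "\<forall>\<phi>. lin ?A \<phi> \<longrightarrow> (\<exists>y\<in>?B. rep ?n ?A \<phi> y)"
    and uB: "\<forall>w. (\<forall>x\<in>?A. (\<Sum>\<sigma>\<in>Iset ?n. emb (x \<sigma>) * w \<sigma>) = 0) \<longrightarrow> (\<forall>\<sigma>\<in>Iset ?n. w \<sigma> = 0)"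
    using IH by blast+
  have XS: "XR cor (t # rs) = stepX (Suc ?n) ?b ?A" by (rule XR_step)
  have YS: "YR cor (t # rs) = stepY (Suc ?n) ?b ?B" by (rule YR_step)
  have len: "length (t # rs) = Suc ?n" by simp
  show ?case
    unfolding XS YS len
  proof (intro conjI ballI allI impI)
    show "modX (stepX (Suc ?n) ?b ?A)" by (rule st.modX_step[OF mA])
    show "vanS (Suc ?n) (stepX (Suc ?n) ?b ?A)" by (rule st.vanX_step[OF vA])
    show "modY (stepY (Suc ?n) ?b ?B)" by (rule st.modY_step[OF mB])
    show "stepY (Suc ?n) ?b ?B = DualS R (Suc ?n) (stepX (Suc ?n) ?b ?A)"
      by (rule st.dual_step[OF mA vA dB Qd])
    show "\<exists>\<phi>\<in>gdual (stepX (Suc ?n) ?b ?A). rep (Suc ?n) (stepX (Suc ?n) ?b ?A) \<phi> y"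
      if "y \<in> stepY (Suc ?n) ?b ?B" for y
      using st.gdual_step[OF mA vA _ that] gB by blast
    show "\<exists>y\<in>stepY (Suc ?n) ?b ?B. rep (Suc ?n) (stepX (Suc ?n) ?b ?A) \<phi> y"
      if "lin (stepX (Suc ?n) ?b ?A) \<phi>" for \<phi>
      using st.lin_step[OF mA mB _ that] lB by blast
    show "w \<sigma> = 0" if "\<forall>x\<in>stepX (Suc ?n) ?b ?A. (\<Sum>\<sigma>\<in>Iset (Suc ?n). emb (x \<sigma>) * w \<sigma>) = 0"
      and "\<sigma> \<in> Iset (Suc ?n)" for w \<sigma>
      using st.uniq_step[OF mA _ that(1)] uB that(2) by blast
  qed
qed

end


theorem lemma6p8:
  fixes R :: "((int, 'n::{finite,linorder}) vec) set"
    and cor :: "(int, 'n) vec \<Rightarrow> (int, 'n) vec"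
    and P :: "((int, 'n) vec) set"
    and g :: "(int, 'n) vec"
    and s :: "(((int, 'n) vec) \<times> int) list"
  assumes "root_system R cor" and "reduced R" and "irreducible_rs R cor"
    and "is_base R P" and "highest_root R P g"
    and "\<forall>x\<in>affine_roots R. (\<exists>j. (tensT x j :: 't::idom) \<noteq> 0)"
    and "\<exists>u::'t. 2 * u = 1"
    and "set s \<subseteq> Shat P g"
  shows "(Ymod cor s :: (nat list \<Rightarrow> ('n, 't) spoly fract) set) =
           {z. (\<forall>\<sigma>. \<sigma> \<notin> Iset (length s) \<longrightarrow> z \<sigma> = 0) \<and> (\<forall>\<sigma>. z \<sigma> \<in> Qset R) \<and>
               (\<forall>m\<in>Xmod cor s. (\<Sum>\<sigma>\<in>Iset (length s). z \<sigma> * emb (m \<sigma>)) \<in> Sset)}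
       \<and> (\<forall>y\<in>(Ymod cor s :: (nat list \<Rightarrow> ('n, 't) spoly fract) set).
            \<exists>\<phi>\<in>gdual (Xmod cor s). \<forall>x\<in>Xmod cor s.
              emb (\<phi> x) = (\<Sum>\<sigma>\<in>Iset (length s). emb (x \<sigma>) * y \<sigma>))
       \<and> (\<forall>\<phi>\<in>gdual (Xmod cor s :: (nat list \<Rightarrow> ('n, 't) spoly) set).
            \<exists>!y. y \<in> Ymod cor s \<and> (\<forall>x\<in>Xmod cor s.
              emb (\<phi> x) = (\<Sum>\<sigma>\<in>Iset (length s). emb (x \<sigma>) * y \<sigma>)))"
proof -
  interpret rsetup R cor P g using assms(1,4,5) by unfold_locales
  obtain u :: 't where u: "2 * u = 1" using assms(7) by blast
  define hh :: "('n, 't) spoly" where "hh = Poly_Mapping.single 0 u"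
  have half: "2 * hh = 1"
  proof -
    have "(2::('n, 't) spoly) = Poly_Mapping.single 0 2" by (simp only: single_numeral)
    then have "2 * hh = Poly_Mapping.single (0 + 0) (2 * u)" by (simp only: hh_def mult_single)
    then show ?thesis by (simp only: u add_0_left single_one)
  qed
  have rsS: "set (rev s) \<subseteq> Shat P g" using assms(8) by simp
  note M = main_ind[OF assms(6) half rsS]
  let ?X = "XR cor (rev s) :: (nat list \<Rightarrow> ('n, 't) spoly) set"
  let ?Y = "YR cor (rev s) :: (nat list \<Rightarrow> ('n, 't) spoly fract) set"
  have XM: "Xmod cor s = ?X" by (simp add: Xmod_def)
  have YM: "Ymod cor s = ?Y" by (simp add: Ymod_def)
  have len: "length (rev s) = length s" by simp
  note M2 = M[unfolded len]
  have dY: "?Y = DualS R (length s) ?X" using M2 by blast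
  have gY: "\<forall>y\<in>?Y. \<exists>\<phi>\<in>gdual ?X. rep (length s) ?X \<phi> y" using M2 by blast
  have lY: "\<forall>\<phi>. lin ?X \<phi> \<longrightarrow> (\<exists>y\<in>?Y. rep (length s) ?X \<phi> y)" using M2 by blast
  have uY: "\<forall>w. (\<forall>x\<in>?X. (\<Sum>\<sigma>\<in>Iset (length s). emb (x \<sigma>) * w \<sigma>) = 0) \<longrightarrow> (\<forall>\<sigma>\<in>Iset (length s). w \<sigma> = 0)"
    using M2 by blast
  have c1: "(Ymod cor s :: (nat list \<Rightarrow> ('n, 't) spoly fract) set) =
           {z. (\<forall>\<sigma>. \<sigma> \<notin> Iset (length s) \<longrightarrow> z \<sigma> = 0) \<and> (\<forall>\<sigma>. z \<sigma> \<in> Qset R) \<and>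
               (\<forall>m\<in>Xmod cor s. (\<Sum>\<sigma>\<in>Iset (length s). z \<sigma> * emb (m \<sigma>)) \<in> Sset)}"
    unfolding XM YM dY DualS_def vanish_def ..
  have c2: "\<forall>y\<in>(Ymod cor s :: (nat list \<Rightarrow> ('n, 't) spoly fract) set).
            \<exists>\<phi>\<in>gdual (Xmod cor s). \<forall>x\<in>Xmod cor s.
              emb (\<phi> x) = (\<Sum>\<sigma>\<in>Iset (length s). emb (x \<sigma>) * y \<sigma>)"
    using gY unfolding XM YM rep_def .
  have c3: "\<forall>\<phi>\<in>gdual (Xmod cor s :: (nat list \<Rightarrow> ('n, 't) spoly) set).
            \<exists>!y. y \<in> Ymod cor s \<and> (\<forall>x\<in>Xmod cor s.
              emb (\<phi> x) = (\<Sum>\<sigma>\<in>Iset (length s). emb (x \<sigma>) * y \<sigma>))"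
    unfolding XM YM
  proof
    fix \<phi> assume "\<phi> \<in> gdual ?X"
    then have "lin ?X \<phi>" by (rule gdual_lin)
    then obtain y where y: "y \<in> ?Y" "rep (length s) ?X \<phi> y" using lY by blast
    show "\<exists>!y. y \<in> ?Y \<and> (\<forall>x\<in>?X. emb (\<phi> x) = (\<Sum>\<sigma>\<in>Iset (length s). emb (x \<sigma>) * y \<sigma>))"
    proof (rule ex1I)
      show "y \<in> ?Y \<and> (\<forall>x\<in>?X. emb (\<phi> x) = (\<Sum>\<sigma>\<in>Iset (length s). emb (x \<sigma>) * y \<sigma>))"
        using y by (simp add: rep_def)
    next
      fix y' assume y': "y' \<in> ?Y \<and> (\<forall>x\<in>?X. emb (\<phi> x) = (\<Sum>\<sigma>\<in>Iset (length s). emb (x \<sigma>) * y' \<sigma>))"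
      have zero: "\<forall>x\<in>?X. (\<Sum>\<sigma>\<in>Iset (length s). emb (x \<sigma>) * (y' \<sigma> - y \<sigma>)) = 0"
      proof
        fix x assume x: "x \<in> ?X"
        have "(\<Sum>\<sigma>\<in>Iset (length s). emb (x \<sigma>) * (y' \<sigma> - y \<sigma>))
            = (\<Sum>\<sigma>\<in>Iset (length s). emb (x \<sigma>) * y' \<sigma>) - (\<Sum>\<sigma>\<in>Iset (length s). emb (x \<sigma>) * y \<sigma>)"
          by (simp add: right_diff_distrib sum_subtractf)
        also have "\<dots> = emb (\<phi> x) - emb (\<phi> x)" using y' y(2) x by (simp add: rep_def)
        finally show "(\<Sum>\<sigma>\<in>Iset (length s). emb (x \<sigma>) * (y' \<sigma> - y \<sigma>)) = 0" by simp
      qed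
      have eq: "\<forall>\<sigma>\<in>Iset (length s). y' \<sigma> - y \<sigma> = 0"
        using mp[OF spec[OF uY, of "\<lambda>\<sigma>. y' \<sigma> - y \<sigma>"] zero] by simp
      have v: "vanish (length s) y" "vanish (length s) y'" using y(1) y' dY by (auto simp: DualS_def)
      show "y' = y"
      proof
        fix \<sigma> show "y' \<sigma> = y \<sigma>"
          using eq v by (cases "\<sigma> \<in> Iset (length s)") (auto simp: vanish_def)
      qed
    qed
  qed
  show ?thesis using c1 c2 c3 by blast
qed


end
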